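(* For $n\ge2$ let $\mathcal{W}_n$ be the arc diagram with $\mathbf{Z}=\{Z_1,\dots,Z_n\}$, $\mathbf{a}=\{a_1,\dots,a_{2n-2}\}$, where $a_1,\dots,a_{n-1}$ lie on $Z_1$ in this order and $a_{n+i-1}\in Z_{i+1}$ for $i=1,\dots,n-1$, and matching $M(a_i)=M(a_{2n-i-1})=i$ for $i=1,\dots,n-1$. Then for every $k=0,\dots,n-1$ there is an isomorphism of differential algebras $\mathcal{A}(\mathcal{W}_n,k)\cong\mathcal{A}(n-1,k)$.
   Context: Strands algebra $\mathcal{A}(n,k)$: the $\mathbb{F}_2$-vector space with basis triples $(S,T,\phi)$, $S,T\subset\{1,\dots,n\}$ of size $k$, $\phi\colon S\to T$ a bijection with $\phi(i)\ge i$; product $(S,T,\phi)(U,V,\psi)=(S,V,\psi\circ\phi)$ if $T=U$ and $\mathrm{inv}(\phi)+\mathrm{inv}(\psi)=\mathrm{inv}(\psi\circ\phi)$, else $0$, where $\mathrm{inv}$ counts pairs $i<j$ with $\phi(i)>\phi(j)$; differential: sum over inversions of the generators obtained by swapping the two images, keeping those with inversion number exactly one less. $\mathcal{A}(n)=\bigoplus_k\mathcal{A}(n,k)$. For an arc diagram $\mathcal{Z}=(\mathbf{Z},\mathbf{a},M)$ with $\mathbf{Z}=\{Z_1,\dots,Z_l\}$ (oriented segments), $\mathbf{a}=\{a_1,\dots,a_{2k}\}$ ordered along $\mathbf{Z}$, $|Z_j|=\#(Z_j\cap\mathbf{a})$, the extended strands algebra $\mathcal{A}(|Z_1|,\dots,|Z_l|)=\bigoplus\mathcal{A}(|Z_1|,k_1)\otimes\cdots\otimes\mathcal{A}(|Z_l|,k_l)$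 is viewed inside $\mathcal{A}(2k)$, strands staying within segments. For $s\subset\{1,\dots,k\}$ with $|s|=i$, a section is $S\subset M^{-1}(s)$ mapped bijectively onto $s$ by $M$; $I(s)=\sum_{S}(S,S,\mathrm{id})$ over sections; $I=\sum_{|s|=i}I(s)$. For $S,T\subset\{1,\dots,2k\}$ and a bijection $\psi\colon S\to T$ with $\psi(x)>x$, $a_i(S,T,\psi)=\sum_U(S\cup U,T\cup U,\psi\cup\mathrm{id}_U)$ over $U$ disjoint from $S\cup T$ with $|S\cup U|=i$. $\mathcal{A}(\mathcal{Z},i)$ is the subalgebra generated by the $I(s)$, $|s|=i$, and all $I\,a_i(S,T,\psi)\,I$; it is closed under the differential. *)

theory Defs
  imports Main
begin

text \<open>Generators (S,T,phi) of the strands algebra are encoded as the finite graph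
  of phi, a set of strands (x, phi x); S = Domain, T = Range.
  Elements of the F2-vector space are finite sets of generators (formal sums
  with F2 coefficients); addition is symmetric difference.\<close>

type_synonym gen = "(nat \<times> nat) set"
type_synonym elt = "gen set"

definition is_gen :: "nat \<Rightarrow> gen \<Rightarrow> bool" where
  "is_gen n g \<longleftrightarrow> g \<subseteq> {1..n} \<times> {1..n} \<and> (\<forall>(a,b)\<in>g. a \<le> b) \<and>
     (\<forall>(a,b)\<in>g. \<forall>(c,d)\<in>g. (a = c \<longleftrightarrow> b = d))"

definition invs :: "gen \<Rightarrow> ((nat \<times> nat) \<times> (nat \<times> nat)) set" where
  "invs g = {((i,a),(j,b)). (i,a) \<in> g \<and> (j,b) \<in> g \<and> i < j \<and> b < a}"

definition ninv :: "gen \<Rightarrow> nat" where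
  "ninv g = card (invs g)"

text \<open>Product of generators: composition psi o phi of (S,T,phi)(U,V,psi).\<close>
definition gmult :: "gen \<Rightarrow> gen \<Rightarrow> gen option" where
  "gmult x y = (if Range x = Domain y \<and> ninv x + ninv y = ninv (x O y)
                then Some (x O y) else None)"

definition swap_strands :: "gen \<Rightarrow> nat \<times> nat \<Rightarrow> nat \<times> nat \<Rightarrow> gen" where
  "swap_strands g p q = (g - {p, q}) \<union> {(fst p, snd q), (fst q, snd p)}"

definition eadd :: "elt \<Rightarrow> elt \<Rightarrow> elt" where
  "eadd X Y = (X - Y) \<union> (Y - X)"

definition emult :: "elt \<Rightarrow> elt \<Rightarrow> elt" where
  "emult X Y = {c. odd (card {(x,y). x \<in> X \<and> y \<in> Y \<and> gmult x y = Some c})}"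

definition ediff :: "elt \<Rightarrow> elt" where
  "ediff X = {c. odd (card {(x,p,q). x \<in> X \<and> (p,q) \<in> invs x \<and>
                  c = swap_strands x p q \<and> ninv c + 1 = ninv x})}"

definition strands_alg :: "nat \<Rightarrow> nat \<Rightarrow> elt set" where
  "strands_alg n k = {X. finite X \<and> (\<forall>g\<in>X. is_gen n g \<and> card g = k)}"

inductive_set gen_subalg :: "elt set \<Rightarrow> elt set" for G where
  base: "x \<in> G \<Longrightarrow> x \<in> gen_subalg G"
| zero: "{} \<in> gen_subalg G"
| add: "x \<in> gen_subalg G \<Longrightarrow> y \<in> gen_subalg G \<Longrightarrow> eadd x y \<in> gen_subalg G"
| mult: "x \<in> gen_subalg G \<Longrightarrow> y \<in> gen_subalg G \<Longrightarrow> emult x y \<in> gen_subalg G"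

text \<open>Arc diagram with points 1..N (N = 2K) ordered along the segments;
  seg a is the index of the segment containing point a, M the matching onto 1..K.\<close>
definition ext_gen :: "nat \<Rightarrow> (nat \<Rightarrow> nat) \<Rightarrow> gen \<Rightarrow> bool" where
  "ext_gen N seg g \<longleftrightarrow> is_gen N g \<and> (\<forall>(a,b)\<in>g. seg a = seg b)"

definition idg :: "nat set \<Rightarrow> gen" where
  "idg S = {(x,x) | x. x \<in> S}"

definition I_s :: "nat \<Rightarrow> (nat \<Rightarrow> nat) \<Rightarrow> nat set \<Rightarrow> elt" where
  "I_s N M s = {idg S | S. S \<subseteq> {1..N} \<and> inj_on M S \<and> M ` S = s}"

definition I_tot :: "nat \<Rightarrow> nat \<Rightarrow> (nat \<Rightarrow> nat) \<Rightarrow> nat \<Rightarrow> elt" where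
  "I_tot N K M i = (\<Union>s \<in> {s. s \<subseteq> {1..K} \<and> card s = i}. I_s N M s)"

definition a_elt :: "nat \<Rightarrow> nat \<Rightarrow> gen \<Rightarrow> elt" where
  "a_elt N i psi = {psi \<union> idg U | U. U \<subseteq> {1..N} \<and> U \<inter> (Domain psi \<union> Range psi) = {}
                     \<and> card (Domain psi \<union> U) = i}"

definition arc_alg :: "nat \<Rightarrow> nat \<Rightarrow> (nat \<Rightarrow> nat) \<Rightarrow> (nat \<Rightarrow> nat) \<Rightarrow> nat \<Rightarrow> elt set" where
  "arc_alg N K seg M i = gen_subalg
     ({I_s N M s | s. s \<subseteq> {1..K} \<and> card s = i} \<union>
      {emult (emult (I_tot N K M i) (a_elt N i psi)) (I_tot N K M i) | psi.
          ext_gen N seg psi \<and> (\<forall>(a,b)\<in>psi. a < b)})"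

definition dga_iso :: "elt set \<Rightarrow> elt set \<Rightarrow> bool" where
  "dga_iso A B \<longleftrightarrow> (\<exists>f. bij_betw f A B \<and>
     (\<forall>x\<in>A. \<forall>y\<in>A. f (eadd x y) = eadd (f x) (f y) \<and> f (emult x y) = emult (f x) (f y))
     \<and> (\<forall>x\<in>A. f (ediff x) = ediff (f x)))"

text \<open>The arc diagram W_n: points 1..2n-2; points 1..n-1 on Z_1, point n+i-1 on Z_(i+1);
  M(a_i) = M(a_(2n-i-1)) = i.\<close>
definition W_seg :: "nat \<Rightarrow> nat \<Rightarrow> nat" where
  "W_seg n a = (if a \<le> n - 1 then 1 else a + 2 - n)"

definition W_M :: "nat \<Rightarrow> nat \<Rightarrow> nat" where
  "W_M n a = (if a \<le> n - 1 then a else 2 * n - 1 - a)"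

end

theory Submission
  imports Defs
begin

definition bijr :: "gen \<Rightarrow> bool" where
  "bijr g \<longleftrightarrow> (\<forall>(a,b)\<in>g. \<forall>(c,d)\<in>g. (a = c \<longleftrightarrow> b = d))"
definition upw :: "gen \<Rightarrow> bool" where
  "upw g \<longleftrightarrow> (\<forall>(a,b)\<in>g. a \<le> b)"
definition wt :: "nat set \<Rightarrow> nat \<times> nat \<Rightarrow> nat" where
  "wt D s = card {d\<in>D. fst s < d \<and> d < snd s}"
definition cr :: "gen \<Rightarrow> nat set \<Rightarrow> nat" where
  "cr g D = (\<Sum>s\<in>g. wt D s)"

lemma bijrD1: "bijr g \<Longrightarrow> (a,b)\<in>g \<Longrightarrow> (a,c)\<in>g \<Longrightarrow> b = c"
  unfolding bijr_def by fastforce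
lemma bijrD2: "bijr g \<Longrightarrow> (a,b)\<in>g \<Longrightarrow> (c,b)\<in>g \<Longrightarrow> a = c"
  unfolding bijr_def by fastforce
lemma upwD: "upw g \<Longrightarrow> (a,b)\<in>g \<Longrightarrow> a \<le> b"
  unfolding upw_def by fastforce

lemma is_gen_iff: "is_gen n g \<longleftrightarrow> g \<subseteq> {1..n}\<times>{1..n} \<and> upw g \<and> bijr g"
  unfolding is_gen_def upw_def bijr_def by blast

lemma wt_split:
  assumes "p \<le> q" "q \<le> r" "q \<notin> D"
  shows "wt D (p,r) = wt D (p,q) + wt D (q,r)"
proof -
  have e: "{d\<in>D. p < d \<and> d < r} = {d\<in>D. p < d \<and> d < q} \<union> {d\<in>D. q < d \<and> d < r}"
    using assms by (auto; metis linorder_neqE_nat)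
  have f1: "finite {d\<in>D. p < d \<and> d < q}" by (rule finite_subset[of _ "{..<q}"]) auto
  have f2: "finite {d\<in>D. q < d \<and> d < r}" by (rule finite_subset[of _ "{..<r}"]) auto
  show ?thesis unfolding wt_def using e f1 f2
    by (simp add: card_Un_disjoint disjoint_iff)
qed

lemma invs_sub: "invs g \<subseteq> g \<times> g"
  unfolding invs_def by auto

lemma finite_invs: "finite g \<Longrightarrow> finite (invs g)"
  using invs_sub finite_subset by blast

lemma invs_union_id:
  assumes fin: "finite g" and up: "upw g"
    and disj: "D \<inter> (Domain g \<union> Range g) = {}"
  shows "ninv (g \<union> idg D) = ninv g + cr g D"
proof -
  define S where "S = (SIGMA s:g. {d\<in>D. fst s < d \<and> d < snd s})"
  define f where "f = (\<lambda>(s::nat\<times>nat, d::nat). (s, (d,d)))"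
  have e: "invs (g \<union> idg D) = invs g \<union> f ` S"
  proof
    show "invs (g \<union> idg D) \<subseteq> invs g \<union> f ` S"
    proof
      fix x assume x: "x \<in> invs (g \<union> idg D)"
      then obtain i a j b where xe: "x = ((i,a),(j,b))" and ia: "(i,a) \<in> g \<union> idg D"
        and jb: "(j,b) \<in> g \<union> idg D" and ij: "i < j" "b < a"
        unfolding invs_def by auto
      have iag: "(i,a) \<in> g"
      proof (rule ccontr)
        assume "(i,a) \<notin> g"
        then have "i = a" using ia unfolding idg_def by auto
        moreover have "j \<le> b" using jb up unfolding idg_def upw_def by auto
        ultimately show False using ij by auto
      qed
      show "x \<in> invs g \<union> f ` S"
      proof (cases "(j,b) \<in> g")
        case True then show ?thesis using xe iag ij unfolding invs_def by auto
      next
        case False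
        then have "j = b" "j \<in> D" using jb unfolding idg_def by auto
        then have "((i,a),j) \<in> S" using iag ij unfolding S_def by auto
        then show ?thesis using xe \<open>j = b\<close> unfolding f_def by force
      qed
    qed
  next
    show "invs g \<union> f ` S \<subseteq> invs (g \<union> idg D)"
      unfolding invs_def S_def f_def idg_def by auto
  qed
  have d: "invs g \<inter> f ` S = {}"
  proof -
    { fix x assume "x \<in> invs g" "x \<in> f ` S"
      then obtain s d where "x = (s,(d,d))" "d \<in> D" unfolding f_def S_def by auto
      with \<open>x \<in> invs g\<close> have "(d,d) \<in> g" unfolding invs_def by auto
      with \<open>d \<in> D\<close> disj have False by auto }
    then show ?thesis by blast
  qed
  have fS: "finite S" unfolding S_def
    by (rule finite_SigmaI[OF fin]) (rule finite_subset[of _ "{..<snd _}"], auto)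
  have inj: "inj_on f S" unfolding f_def inj_on_def by auto
  have cS: "card S = cr g D" unfolding S_def cr_def wt_def
    by (rule card_SigmaI[OF fin]) (auto intro: finite_subset[of _ "{..<snd _}"])
  show ?thesis unfolding ninv_def e
    using card_Un_disjoint[OF finite_invs[OF fin] finite_imageI[OF fS] d] card_image[OF inj] cS
    by simp
qed

lemma invs_union_up:
  assumes up: "upw g" and lt: "\<And>a b u. (a,b)\<in>g \<Longrightarrow> u \<in> U \<Longrightarrow> b < u"
  shows "invs (g \<union> idg U) = invs g"
proof -
  have lt2: "\<And>a b u. (a,b)\<in>g \<Longrightarrow> u \<in> U \<Longrightarrow> a < u"
    using lt up upwD le_less_trans by blast
  show ?thesis unfolding invs_def idg_def
    using lt lt2 by (auto; fastforce)
qed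



lemma comp_lemma:
  assumes fg: "finite g" and bg: "bijr g" and bh: "bijr h"
    and ug: "upw g" and uh: "upw h" and rd: "Range g = Domain h"
    and dD: "D \<inter> Range g = {}"
  shows "cr (g O h) D = cr g D + cr h D" and "card (g O h) = card g"
proof -
  define T where "T = {(p,q,r). (p,q)\<in>g \<and> (q,r)\<in>h}"
  define f1 where "f1 = (\<lambda>(p::nat,q::nat,r::nat). (p,r))"
  define f2 where "f2 = (\<lambda>(p::nat,q::nat,r::nat). (p,q))"
  define f3 where "f3 = (\<lambda>(p::nat,q::nat,r::nat). (q,r))"
  have i1: "inj_on f1 T" unfolding inj_on_def T_def f1_def using bijrD1[OF bg] by auto
  have i2: "inj_on f2 T" unfolding inj_on_def T_def f2_def using bijrD1[OF bh] by auto
  have i3: "inj_on f3 T" unfolding inj_on_def T_def f3_def using bijrD2[OF bg] by auto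
  have m1: "f1 ` T = g O h" unfolding T_def f1_def by force
  have m2: "f2 ` T = g"
  proof
    show "f2 ` T \<subseteq> g" unfolding T_def f2_def by auto
    show "g \<subseteq> f2 ` T"
    proof
      fix x assume "x \<in> g"
      then obtain p q where x: "x = (p,q)" "(p,q)\<in>g" by (cases x) auto
      then have "q \<in> Domain h" using rd by auto
      then obtain r where "(q,r)\<in>h" by auto
      then have "(p,q,r) \<in> T" using x unfolding T_def by auto
      then show "x \<in> f2 ` T" using x unfolding f2_def by force
    qed
  qed
  have m3: "f3 ` T = h"
  proof
    show "f3 ` T \<subseteq> h" unfolding T_def f3_def by auto
    show "h \<subseteq> f3 ` T"
    proof
      fix x assume "x \<in> h"
      then obtain q r where x: "x = (q,r)" "(q,r)\<in>h" by (cases x) auto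
      then have "q \<in> Range g" using rd by auto
      then obtain p where "(p,q)\<in>g" by auto
      then have "(p,q,r) \<in> T" using x unfolding T_def by auto
      then show "x \<in> f3 ` T" using x unfolding f3_def by force
    qed
  qed
  have "cr (g O h) D = (\<Sum>t\<in>T. wt D (f1 t))"
    unfolding cr_def m1[symmetric] by (simp add: sum.reindex[OF i1])
  also have "\<dots> = (\<Sum>t\<in>T. wt D (f2 t) + wt D (f3 t))"
  proof (rule sum.cong[OF refl])
    fix t assume "t \<in> T"
    then obtain p q r where t: "t = (p,q,r)" "(p,q)\<in>g" "(q,r)\<in>h" unfolding T_def by auto
    have "q \<notin> D" using t dD by auto
    then show "wt D (f1 t) = wt D (f2 t) + wt D (f3 t)"
      unfolding t f1_def f2_def f3_def using wt_split[of p q r D] upwD[OF ug t(2)] upwD[OF uh t(3)] by simp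
  qed
  also have "\<dots> = cr g D + cr h D"
    unfolding sum.distrib cr_def m2[symmetric] m3[symmetric]
    by (simp add: sum.reindex[OF i2] sum.reindex[OF i3])
  finally show "cr (g O h) D = cr g D + cr h D" .
  show "card (g O h) = card g"
    using card_image[OF i1] card_image[OF i2] m1 m2 by simp
qed

lemma comp_bijr: assumes bg: "bijr g" and bh: "bijr h" shows "bijr (g O h)"
proof -
  { fix a c a' c' assume "(a,c) \<in> g O h" "(a',c') \<in> g O h"
    then obtain b b' where "(a,b)\<in>g" "(b,c)\<in>h" "(a',b')\<in>g" "(b',c')\<in>h" by blast
    then have "a = a' \<longleftrightarrow> c = c'"
      using bijrD1[OF bg] bijrD2[OF bg] bijrD1[OF bh] bijrD2[OF bh] by metis }
  then show ?thesis unfolding bijr_def by fast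
qed

lemma comp_upw: "upw g \<Longrightarrow> upw h \<Longrightarrow> upw (g O h)"
  unfolding upw_def by fastforce

lemma comp_gen: "is_gen n g \<Longrightarrow> is_gen n h \<Longrightarrow> Range g = Domain h \<Longrightarrow> is_gen n (g O h)"
  unfolding is_gen_iff using comp_bijr comp_upw by (auto 4 3 simp: relcomp_unfold)

lemma ninv_comp_union:
  assumes fg: "finite g" and fh: "finite h" and bg: "bijr g" and bh: "bijr h"
    and ug: "upw g" and uh: "upw h" and rd: "Range g = Domain h"
    and dD: "D \<inter> (Domain g \<union> Range g \<union> Range h) = {}"
  shows "ninv (g \<union> idg D) + ninv (h \<union> idg D) = ninv ((g \<union> idg D) O (h \<union> idg D))
     \<longleftrightarrow> ninv g + ninv h = ninv (g O h)"
proof -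
  have c: "(g \<union> idg D) O (h \<union> idg D) = g O h \<union> idg D"
    using dD rd unfolding idg_def by blast
  have fgh: "finite (g O h)" using fg fh by (rule finite_relcomp)
  have dgh: "Domain (g O h) = Domain g" "Range (g O h) = Range h" using rd by blast+
  have e1: "ninv (g \<union> idg D) = ninv g + cr g D"
    by (rule invs_union_id[OF fg ug]) (use dD in blast)
  have e2: "ninv (h \<union> idg D) = ninv h + cr h D"
    by (rule invs_union_id[OF fh uh]) (use dD rd in blast)
  have e3: "ninv (g O h \<union> idg D) = ninv (g O h) + cr (g O h) D"
    by (rule invs_union_id[OF fgh comp_upw[OF ug uh]]) (use dD dgh in blast)
  have e4: "cr (g O h) D = cr g D + cr h D"
    by (rule comp_lemma(1)[OF fg bg bh ug uh rd]) (use dD in blast)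
  show ?thesis unfolding c e1 e2 e3 e4 by arith
qed

lemma swap_facts:
  assumes bg: "bijr g" and ug: "upw g" and pq: "(p,q) \<in> invs g"
  shows "swap_strands g p q = insert (fst p, snd q) (insert (fst q, snd p) (g - {p,q}))"
    and "(fst p, snd q) \<notin> g" and "(fst q, snd p) \<notin> g" and "p \<noteq> q"
    and "(fst p, snd q) \<noteq> (fst q, snd p)" and "p \<in> g" and "q \<in> g"
    and "fst p < fst q" and "snd q < snd p" and "fst q \<le> snd q" and "fst p \<le> snd p"
proof -
  obtain i a j b where pe: "p = (i,a)" "q = (j,b)" by (cases p, cases q) auto
  have h: "(i,a)\<in>g" "(j,b)\<in>g" "i<j" "b<a" using pq pe unfolding invs_def by auto
  have jb: "j \<le> b" "i \<le> a" using upwD[OF ug h(1)] upwD[OF ug h(2)] by auto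
  show "swap_strands g p q = insert (fst p, snd q) (insert (fst q, snd p) (g - {p,q}))"
    unfolding swap_strands_def by (simp only: Un_insert_right Un_empty_right)
  show "(fst p, snd q) \<notin> g" using bijrD1[OF bg h(1), of b] h pe by auto
  show "(fst q, snd p) \<notin> g" using bijrD1[OF bg h(2), of a] h pe by auto
  show "p \<noteq> q" "(fst p, snd q) \<noteq> (fst q, snd p)" "p \<in> g" "q \<in> g"
    "fst p < fst q" "snd q < snd p" "fst q \<le> snd q" "fst p \<le> snd p" using pe h jb by auto
qed

lemma swap_gen:
  assumes ig: "is_gen n g" and pq: "(p,q) \<in> invs g"
  shows "is_gen n (swap_strands g p q)"
proof -
  have bg: "bijr g" and ug: "upw g" and sg: "g \<subseteq> {1..n}\<times>{1..n}" using ig is_gen_iff by auto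
  note sf = swap_facts[OF bg ug pq]
  obtain i a j b where pe: "p = (i,a)" "q = (j,b)" by (cases p, cases q) auto
  have s: "swap_strands g p q = insert (i,b) (insert (j,a) (g - {(i,a),(j,b)}))"
    using sf(1) pe by simp
  have ia: "(i,a)\<in>g" "(j,b)\<in>g" "i<j" "b<a" "j \<le> b" using sf pe by auto
  have "swap_strands g p q \<subseteq> {1..n}\<times>{1..n}" unfolding s using sg ia by auto
  moreover have "upw (swap_strands g p q)" unfolding s upw_def using ug ia
    by (auto simp: upw_def)
  moreover have "bijr (swap_strands g p q)" unfolding s bijr_def
  proof (intro ballI, clarify)
    fix x y z w assume a1: "(x,y) \<in> insert (i,b) (insert (j,a) (g - {(i,a),(j,b)}))"
      and a2: "(z,w) \<in> insert (i,b) (insert (j,a) (g - {(i,a),(j,b)}))"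
    have r1: "\<And>y. (i,y)\<in>g \<Longrightarrow> y = a" using bijrD1[OF bg ia(1)] by auto
    have r2: "\<And>y. (j,y)\<in>g \<Longrightarrow> y = b" using bijrD1[OF bg ia(2)] by auto
    have r3: "\<And>x. (x,a)\<in>g \<Longrightarrow> x = i" using bijrD2[OF bg ia(1)] by auto
    have r4: "\<And>x. (x,b)\<in>g \<Longrightarrow> x = j" using bijrD2[OF bg ia(2)] by auto
    have bb: "\<And>x y z w. (x,y)\<in>g \<Longrightarrow> (z,w)\<in>g \<Longrightarrow> (x = z \<longleftrightarrow> y = w)"
      using bg unfolding bijr_def by blast
    have ij: "i \<noteq> j" "a \<noteq> b" using ia by auto
    from a1 consider "x = i" "y = b" | "x = j" "y = a" | "(x,y)\<in>g" "(x,y)\<noteq>(i,a)" "(x,y)\<noteq>(j,b)"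
      by blast
    then show "x = z \<longleftrightarrow> y = w"
    proof cases
      case 1
      from a2 consider "z = i" "w = b" | "z = j" "w = a" | "(z,w)\<in>g" "(z,w)\<noteq>(i,a)" "(z,w)\<noteq>(j,b)"
        by blast
      then show ?thesis
        by cases (use 1 ij r1 r4 in \<open>force\<close>)+
    next
      case 2
      from a2 consider "z = i" "w = b" | "z = j" "w = a" | "(z,w)\<in>g" "(z,w)\<noteq>(i,a)" "(z,w)\<noteq>(j,b)"
        by blast
      then show ?thesis
        by cases (use 2 ij r2 r3 in \<open>force\<close>)+
    next
      case 3
      from a2 consider "z = i" "w = b" | "z = j" "w = a" | "(z,w)\<in>g" "(z,w)\<noteq>(i,a)" "(z,w)\<noteq>(j,b)"
        by blast
      then show ?thesis
      proof cases
        case 1 then show ?thesis using 3 r1 r4 by force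
      next
        case 2 then show ?thesis using 3 r2 r3 by force
      next
        case 3 then show ?thesis using \<open>(x,y)\<in>g\<close> bb by blast
      qed
    qed
  qed
  ultimately show ?thesis using is_gen_iff by blast
qed

lemma swap_card:
  assumes fg: "finite g" and bg: "bijr g" and ug: "upw g" and pq: "(p,q) \<in> invs g"
  shows "card (swap_strands g p q) = card g"
proof -
  note sf = swap_facts[OF bg ug pq]
  have ge: "g = insert p (insert q (g - {p,q}))" using sf(6,7) by blast
  have "card g = Suc (Suc (card (g - {p,q})))" using fg sf by (subst ge) simp
  moreover have "card (swap_strands g p q) = Suc (Suc (card (g - {p,q})))"
    unfolding sf(1) using fg sf by simp
  ultimately show ?thesis by simp
qed

lemma swap_cr:
  assumes fg: "finite g" and bg: "bijr g" and ug: "upw g" and pq: "(p,q) \<in> invs g"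
    and jD: "fst q \<notin> D"
  shows "cr (swap_strands g p q) D = cr g D"
proof -
  note sf = swap_facts[OF bg ug pq]
  have g: "g = insert p (insert q (g - {p,q}))" using sf(6,7) by blast
  have "cr g D = wt D p + (wt D q + cr (g - {p,q}) D)"
    unfolding cr_def by (subst g) (use fg sf in simp)
  moreover have "cr (swap_strands g p q) D =
      wt D (fst p, snd q) + (wt D (fst q, snd p) + cr (g - {p,q}) D)"
    unfolding cr_def sf(1) using fg sf by simp
  moreover have "wt D p = wt D (fst p, fst q) + wt D (fst q, snd p)"
    using wt_split[of "fst p" "fst q" "snd p" D] sf jD by (cases p) auto
  moreover have "wt D (fst p, snd q) = wt D (fst p, fst q) + wt D (fst q, snd q)"
    using wt_split[of "fst p" "fst q" "snd q" D] sf jD by auto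
  moreover have "wt D q = wt D (fst q, snd q)" by simp
  ultimately show ?thesis by linarith
qed



definition pj :: "nat \<Rightarrow> gen \<Rightarrow> gen" where
  "pj n x = (\<lambda>(a,b). (W_M n a, W_M n b)) ` x"
definition Wg :: "nat \<Rightarrow> gen \<Rightarrow> bool" where
  "Wg n x \<longleftrightarrow> ext_gen (2*n-2) (W_seg n) x \<and> inj_on (W_M n) (Domain x) \<and> inj_on (W_M n) (Range x)"
definition upp :: "nat \<Rightarrow> gen \<Rightarrow> nat set" where
  "upp n x = {a. (a,a) \<in> x \<and> n \<le> a}"
definition rst :: "gen \<Rightarrow> nat set \<Rightarrow> gen" where
  "rst g D = {(a,b)\<in>g. a \<notin> D}"
definition lift :: "nat \<Rightarrow> gen \<Rightarrow> nat set \<Rightarrow> gen" where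
  "lift n g U = rst g (W_M n ` U) \<union> idg U"
definition adm :: "nat \<Rightarrow> gen \<Rightarrow> nat set \<Rightarrow> bool" where
  "adm n g U \<longleftrightarrow> U \<subseteq> {n..2*n-2} \<and> (\<forall>u\<in>U. (W_M n u, W_M n u) \<in> g)"
definition Lf :: "nat \<Rightarrow> elt \<Rightarrow> elt" where
  "Lf n Y = {x. Wg n x \<and> pj n x \<in> Y}"

lemma M_low: assumes "a \<le> n - 1" shows "W_M n a = a"
  unfolding W_M_def using assms by (rule if_P)
lemma M_up: "1 \<le> n \<Longrightarrow> n \<le> a \<Longrightarrow> a \<le> 2*n-2 \<Longrightarrow> 1 \<le> W_M n a \<and> W_M n a \<le> n - 1"
  unfolding W_M_def by auto
lemma M_up_eq: "1 \<le> n \<Longrightarrow> n \<le> a \<Longrightarrow> a \<le> 2*n-2 \<Longrightarrow> n \<le> b \<Longrightarrow> b \<le> 2*n-2 \<Longrightarrow> W_M n a = W_M n b \<Longrightarrow> a = b"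
  unfolding W_M_def by (auto split: if_splits)

lemma seg_strand:
  assumes "2 \<le> n" "W_seg n a = W_seg n b" "a \<le> b"
  shows "(a \<le> n - 1 \<and> b \<le> n - 1) \<or> (n \<le> a \<and> a = b)"
  using assms unfolding W_seg_def by (auto split: if_splits)

lemma ext_strand:
  assumes n2: "2 \<le> n" and e: "ext_gen (2*n-2) (W_seg n) x" and ab: "(a,b) \<in> x"
  shows "1 \<le> a" "b \<le> 2*n-2" "a \<le> b" "(a \<le> n - 1 \<and> b \<le> n - 1) \<or> (n \<le> a \<and> a = b)"
proof -
  have ig: "is_gen (2*n-2) x" and sg: "W_seg n a = W_seg n b" using e ab unfolding ext_gen_def by auto
  show "1 \<le> a" "b \<le> 2*n-2" "a \<le> b" using ig ab unfolding is_gen_def by auto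
  then show "(a \<le> n - 1 \<and> b \<le> n - 1) \<or> (n \<le> a \<and> a = b)"
    using seg_strand[OF n2 sg] by auto
qed

lemma bijr_img:
  assumes "bijr x" "inj_on f (Domain x)" "inj_on f (Range x)"
  shows "bijr ((\<lambda>(a,b). (f a, f b)) ` x)"
proof -
  { fix a b c d assume ab: "(a,b)\<in>x" and cd: "(c,d)\<in>x"
    have "f a = f c \<longleftrightarrow> a = c" using assms(2) ab cd by (auto simp: inj_on_def)
    moreover have "f b = f d \<longleftrightarrow> b = d" using assms(3) ab cd by (auto simp: inj_on_def)
    moreover have "a = c \<longleftrightarrow> b = d" using assms(1) ab cd unfolding bijr_def by blast
    ultimately have "f a = f c \<longleftrightarrow> f b = f d" by simp }
  then show ?thesis unfolding bijr_def by fast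
qed

lemma rst_fix:
  assumes bg: "bijr g" and fx: "\<And>d. d \<in> D \<Longrightarrow> (d,d) \<in> g"
  shows "g = rst g D \<union> idg D" "Domain (rst g D) \<inter> D = {}" "Range (rst g D) \<inter> D = {}"
proof -
  show "g = rst g D \<union> idg D"
  proof
    show "g \<subseteq> rst g D \<union> idg D"
    proof
      fix x assume "x \<in> g"
      then obtain a b where x: "x = (a,b)" "(a,b)\<in>g" by (cases x) auto
      show "x \<in> rst g D \<union> idg D"
      proof (cases "a \<in> D")
        case True then have "b = a" using bijrD1[OF bg x(2) fx[OF True]] by simp
        then show ?thesis using x True unfolding idg_def by auto
      next
        case False then show ?thesis using x unfolding rst_def by auto
      qed
    qed
    show "rst g D \<union> idg D \<subseteq> g" unfolding rst_def idg_def using fx by auto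
  qed
  show "Domain (rst g D) \<inter> D = {}" unfolding rst_def by auto
  show "Range (rst g D) \<inter> D = {}"
  proof -
    { fix a b assume "(a,b) \<in> rst g D" "b \<in> D"
      then have "(a,b)\<in>g" "a \<notin> D" unfolding rst_def by auto
      with bijrD2[OF bg this(1) fx[OF \<open>b\<in>D\<close>]] \<open>b\<in>D\<close> have False by simp }
    then show ?thesis by blast
  qed
qed

context
  fixes n :: nat assumes n2: "2 \<le> n"
begin

lemma K1:
  assumes w: "Wg n x"
  shows "is_gen (n-1) (pj n x)" "adm n (pj n x) (upp n x)" "x = lift n (pj n x) (upp n x)"
    "card (pj n x) = card x" "finite x"
proof -
  have e: "ext_gen (2*n-2) (W_seg n) x" and iD: "inj_on (W_M n) (Domain x)"
    and iR: "inj_on (W_M n) (Range x)" using w unfolding Wg_def by auto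
  note es = ext_strand[OF n2 e]
  have igx: "is_gen (2*n-2) x" using e unfolding ext_gen_def by auto
  then have bx: "bijr x" and sx: "x \<subseteq> {1..2*n-2}\<times>{1..2*n-2}" using is_gen_iff by auto
  show fx: "finite x" using finite_subset[OF sx] by auto
  define U where "U = upp n x"
  define lo where "lo = {(a,b)\<in>x. a \<le> n - 1}"
  have xe: "x = lo \<union> idg U"
  proof
    show "x \<subseteq> lo \<union> idg U"
    proof
      fix y assume "y \<in> x"
      then obtain a b where y: "y = (a,b)" "(a,b)\<in>x" by (cases y) auto
      show "y \<in> lo \<union> idg U" using es[OF y(2)] y unfolding lo_def U_def upp_def idg_def by auto
    qed
    show "lo \<union> idg U \<subseteq> x" unfolding lo_def U_def upp_def idg_def by auto
  qed
  have lolow: "\<And>a b. (a,b)\<in>lo \<Longrightarrow> a \<le> n-1 \<and> b \<le> n-1 \<and> 1 \<le> a \<and> a \<le> b"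
    unfolding lo_def using es by fastforce
  have Uup: "\<And>u. u \<in> U \<Longrightarrow> n \<le> u \<and> u \<le> 2*n-2 \<and> (u,u) \<in> x"
    unfolding U_def upp_def using es by fastforce
  have i1: "(\<lambda>(a,b). (W_M n a, W_M n b)) ` lo = lo"
  proof -
    have "\<And>y. y\<in>lo \<Longrightarrow> (\<lambda>(a,b). (W_M n a, W_M n b)) y = y" using lolow M_low by auto
    then show ?thesis using image_cong[OF refl, of lo "\<lambda>(a,b). (W_M n a, W_M n b)" "\<lambda>y. y"] by simp
  qed
  have i2: "(\<lambda>(a,b). (W_M n a, W_M n b)) ` idg U = idg (W_M n ` U)"
    unfolding idg_def by force
  have pje: "pj n x = lo \<union> idg (W_M n ` U)"
    unfolding pj_def by (subst xe) (simp only: image_Un i1 i2)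
  show "card (pj n x) = card x"
    unfolding pj_def
  proof (rule card_image, rule inj_onI, clarify)
    fix a b c d assume "(a,b)\<in>x" "(c,d)\<in>x" "W_M n a = W_M n c" "W_M n b = W_M n d"
    then have "a = c" using iD by (auto simp: inj_on_def)
    then show "a = c \<and> b = d" using bijrD1[OF bx \<open>(a,b)\<in>x\<close>] \<open>(c,d)\<in>x\<close> by auto
  qed
  show "is_gen (n-1) (pj n x)"
  proof -
    have "bijr (pj n x)" unfolding pj_def by (rule bijr_img[OF bx iD iR])
    moreover have "upw (pj n x)" unfolding pje upw_def idg_def using lolow by auto
    moreover have "pj n x \<subseteq> {1..n-1}\<times>{1..n-1}"
      unfolding pje idg_def using lolow M_up[of n] Uup n2 by fastforce
    ultimately show ?thesis using is_gen_iff by blast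
  qed
  show "adm n (pj n x) (upp n x)"
    unfolding adm_def U_def[symmetric] pje idg_def using Uup by auto
  have "rst (pj n x) (W_M n ` U) = lo"
  proof
    show "rst (pj n x) (W_M n ` U) \<subseteq> lo" unfolding pje rst_def idg_def by auto
    show "lo \<subseteq> rst (pj n x) (W_M n ` U)"
    proof
      fix y assume y: "y \<in> lo"
      then obtain a b where yy: "y = (a,b)" "(a,b)\<in>lo" by (cases y) auto
      have "a \<notin> W_M n ` U"
      proof
        assume "a \<in> W_M n ` U"
        then obtain u where u: "u \<in> U" "a = W_M n u" by auto
        have "a \<in> Domain x" "u \<in> Domain x" using yy Uup[OF u(1)] unfolding lo_def by auto
        moreover have "W_M n a = W_M n u" using u lolow[OF yy(2)] M_low by simp
        ultimately have "a = u" using iD by (auto simp: inj_on_def)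
        then show False using lolow[OF yy(2)] Uup[OF u(1)] n2 by auto
      qed
      then show "y \<in> rst (pj n x) (W_M n ` U)" using yy unfolding pje rst_def by auto
    qed
  qed
  then show "x = lift n (pj n x) (upp n x)" unfolding lift_def U_def[symmetric] using xe by simp
qed

lemma K2:
  assumes ig: "is_gen (n-1) g" and ad: "adm n g U"
  shows "Wg n (lift n g U)" "pj n (lift n g U) = g" "upp n (lift n g U) = U"
proof -
  define D where "D = W_M n ` U"
  define h where "h = rst g D"
  have bg: "bijr g" and ug: "upw g" and sg: "g \<subseteq> {1..n-1}\<times>{1..n-1}" using ig is_gen_iff by auto
  have Uin: "\<And>u. u \<in> U \<Longrightarrow> n \<le> u \<and> u \<le> 2*n-2" using ad unfolding adm_def by auto
  have fxD: "\<And>d. d \<in> D \<Longrightarrow> (d,d) \<in> g" using ad unfolding adm_def D_def by auto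
  note rf = rst_fix[of g D, OF bg fxD]
  have ge: "g = h \<union> idg D" using rf(1) unfolding h_def .
  have hl: "\<And>a b. (a,b)\<in>h \<Longrightarrow> 1 \<le> a \<and> a \<le> b \<and> b \<le> n-1 \<and> (a,b)\<in>g"
    unfolding h_def rst_def using sg upwD[OF ug] by auto
  have le: "lift n g U = h \<union> idg U" unfolding lift_def h_def D_def ..
  have bh: "bijr h" using bg unfolding h_def rst_def bijr_def by blast
  have bl: "bijr (h \<union> idg U)"
  proof -
    { fix a b c d assume ab: "(a,b)\<in>h \<union> idg U" and cd: "(c,d)\<in>h \<union> idg U"
      have "a = c \<longleftrightarrow> b = d"
      proof (cases "(a,b)\<in>h")
        case True note t = this
        show ?thesis
        proof (cases "(c,d)\<in>h")
          case True then show ?thesis using t bh unfolding bijr_def by blast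
        next
          case False then have "c = d" "c \<in> U" using cd unfolding idg_def by auto
          then show ?thesis using hl[OF t] Uin[of c] n2 by auto
        qed
      next
        case False then have ab2: "a = b" "a \<in> U" using ab unfolding idg_def by auto
        show ?thesis
        proof (cases "(c,d)\<in>h")
          case True then show ?thesis using ab2 hl[OF True] Uin[of a] n2 by auto
        next
          case False then have "c = d" using cd unfolding idg_def by auto
          then show ?thesis using ab2 by simp
        qed
      qed }
    then show ?thesis unfolding bijr_def by fast
  qed
  have ul: "upw (h \<union> idg U)" unfolding upw_def idg_def using hl by auto
  have sl: "h \<union> idg U \<subseteq> {1..2*n-2}\<times>{1..2*n-2}" using hl Uin n2 unfolding idg_def by fastforce
  have segl: "\<forall>(a,b)\<in>h \<union> idg U. W_seg n a = W_seg n b"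
    using hl unfolding idg_def W_seg_def by fastforce
  have DomE: "Domain (h \<union> idg U) = Domain h \<union> U" "Range (h \<union> idg U) = Range h \<union> U"
    unfolding idg_def by auto
  have injU: "inj_on (W_M n) U" using M_up_eq[of n] Uin n2 by (auto simp: inj_on_def)
  have injA: "inj_on (W_M n) (A \<union> U)" if A1: "\<And>a. a \<in> A \<Longrightarrow> a \<le> n-1" and A2: "A \<inter> D = {}" for A
  proof (rule inj_onI)
    fix x y assume x: "x \<in> A \<union> U" and y: "y \<in> A \<union> U" and e: "W_M n x = W_M n y"
    show "x = y"
    proof (cases "x \<in> A")
      case True note xa = this
      show ?thesis
      proof (cases "y \<in> A")
        case True then show ?thesis using xa e A1 M_low by metis
      next
        case False then have "y \<in> U" using y by auto
        then have "W_M n y \<in> D" unfolding D_def by auto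
        then have "x \<in> D" using e M_low[OF A1[OF xa]] by simp
        then show ?thesis using xa A2 by auto
      qed
    next
      case False then have xu: "x \<in> U" using x by auto
      show ?thesis
      proof (cases "y \<in> A")
        case True
        have "W_M n x \<in> D" using xu unfolding D_def by auto
        then have "y \<in> D" using e M_low[OF A1[OF True]] by simp
        then show ?thesis using True A2 by auto
      next
        case False then have "y \<in> U" using y by auto
        then show ?thesis using xu e injU by (auto simp: inj_on_def)
      qed
    qed
  qed
  have iD: "inj_on (W_M n) (Domain (h \<union> idg U))" unfolding DomE
  proof (rule injA)
    show "\<And>a. a \<in> Domain h \<Longrightarrow> a \<le> n-1" using hl by force
    show "Domain h \<inter> D = {}" unfolding h_def by (rule rf(2))
  qed
  have iR: "inj_on (W_M n) (Range (h \<union> idg U))" unfolding DomE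
  proof (rule injA)
    show "\<And>a. a \<in> Range h \<Longrightarrow> a \<le> n-1" using hl by force
    show "Range h \<inter> D = {}" unfolding h_def by (rule rf(3))
  qed
  show "Wg n (lift n g U)" unfolding le Wg_def ext_gen_def
    using iD iR segl bl ul sl is_gen_iff by blast
  have i1: "(\<lambda>(a,b). (W_M n a, W_M n b)) ` h = h"
  proof -
    have hm: "\<And>a b. (a,b)\<in>h \<Longrightarrow> W_M n a = a \<and> W_M n b = b"
    proof -
      fix a b assume ab: "(a,b)\<in>h"
      have "a \<le> n-1" "b \<le> n-1" using hl[OF ab] by auto
      then show "W_M n a = a \<and> W_M n b = b" using M_low by auto
    qed
    have "\<And>y. y\<in>h \<Longrightarrow> (\<lambda>(a,b). (W_M n a, W_M n b)) y = y" using hm by auto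
    then show ?thesis using image_cong[OF refl, of h "\<lambda>(a,b). (W_M n a, W_M n b)" "\<lambda>y. y"] by simp
  qed
  have i2: "(\<lambda>(a,b). (W_M n a, W_M n b)) ` idg U = idg D"
    unfolding idg_def D_def by force
  show "pj n (lift n g U) = g" unfolding le pj_def image_Un i1 i2 using ge by simp
  show "upp n (lift n g U) = U" unfolding le upp_def idg_def using hl Uin n2 by fastforce
qed

end


lemma is_gen_subset: "is_gen m g \<Longrightarrow> h \<subseteq> g \<Longrightarrow> is_gen m h"
  unfolding is_gen_def by blast

lemma is_gen_finite: "is_gen m g \<Longrightarrow> finite g"
  unfolding is_gen_def using finite_subset by blast

lemma swap_dom: assumes "(p,q) \<in> invs g"
  shows "Domain (swap_strands g p q) \<subseteq> Domain g" "Range (swap_strands g p q) \<subseteq> Range g"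
  using assms unfolding swap_strands_def invs_def by force+

lemma RD_idg: "Range (A \<union> idg D) = Range A \<union> D" "Domain (A \<union> idg D) = Domain A \<union> D"
  unfolding idg_def by auto

lemma comp_idg: assumes "Range A \<inter> U = {}" "Domain B \<inter> U = {}"
  shows "(A \<union> idg U) O (B \<union> idg U) = A O B \<union> idg U"
proof
  show "(A \<union> idg U) O (B \<union> idg U) \<subseteq> A O B \<union> idg U"
  proof
    fix x assume "x \<in> (A \<union> idg U) O (B \<union> idg U)"
    then obtain a b c where x: "x = (a,c)" "(a,b) \<in> A \<union> idg U" "(b,c) \<in> B \<union> idg U" by blast
    show "x \<in> A O B \<union> idg U"
    proof (cases "(a,b) \<in> A")
      case True
      then have "b \<notin> U" using assms(1) by blast
      then have "(b,c) \<in> B" using x(3) unfolding idg_def by blast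
      then show ?thesis using x True by blast
    next
      case False
      then have "a = b" "b \<in> U" using x(2) unfolding idg_def by auto
      then have "(b,c) \<notin> B" using assms(2) by blast
      then have "b = c" using x(3) unfolding idg_def by blast
      then show ?thesis using x \<open>a = b\<close> \<open>b \<in> U\<close> unfolding idg_def by blast
    qed
  qed
  show "A O B \<union> idg U \<subseteq> (A \<union> idg U) O (B \<union> idg U)" unfolding idg_def by blast
qed

lemma un_cancel: "A \<inter> D = {} \<Longrightarrow> B \<inter> D = {} \<Longrightarrow> (A \<union> D = B \<union> D) = (A = B)"
  by blast

context
  fixes n :: nat assumes n2: "2 \<le> n"
begin

lemma lift_setup:
  assumes ig: "is_gen (n-1) g" and ad: "adm n g U"
  shows "g = rst g (W_M n ` U) \<union> idg (W_M n ` U)"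
    "Domain (rst g (W_M n ` U)) \<inter> W_M n ` U = {}" "Range (rst g (W_M n ` U)) \<inter> W_M n ` U = {}"
    "lift n g U = rst g (W_M n ` U) \<union> idg U"
    "is_gen (n-1) (rst g (W_M n ` U))"
    "\<And>a b. (a,b) \<in> rst g (W_M n ` U) \<Longrightarrow> 1 \<le> a \<and> a \<le> b \<and> b \<le> n-1"
    "\<And>u. u \<in> U \<Longrightarrow> n \<le> u \<and> u \<le> 2*n-2"
    "invs (lift n g U) = invs (rst g (W_M n ` U))"
    "W_M n ` U \<subseteq> {1..n-1}"
proof -
  have bg: "bijr g" and ug: "upw g" and sg: "g \<subseteq> {1..n-1}\<times>{1..n-1}" using ig is_gen_iff by auto
  have fxD: "\<And>d. d \<in> W_M n ` U \<Longrightarrow> (d,d) \<in> g" using ad unfolding adm_def by auto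
  note rf = rst_fix[of g "W_M n ` U", OF bg fxD]
  show "g = rst g (W_M n ` U) \<union> idg (W_M n ` U)" by (rule rf(1))
  show "Domain (rst g (W_M n ` U)) \<inter> W_M n ` U = {}" by (rule rf(2))
  show "Range (rst g (W_M n ` U)) \<inter> W_M n ` U = {}" by (rule rf(3))
  show le: "lift n g U = rst g (W_M n ` U) \<union> idg U" unfolding lift_def ..
  show ir: "is_gen (n-1) (rst g (W_M n ` U))" by (rule is_gen_subset[OF ig]) (auto simp: rst_def)
  show hl: "\<And>a b. (a,b) \<in> rst g (W_M n ` U) \<Longrightarrow> 1 \<le> a \<and> a \<le> b \<and> b \<le> n-1"
    using sg upwD[OF ug] unfolding rst_def by auto
  show Uin: "\<And>u. u \<in> U \<Longrightarrow> n \<le> u \<and> u \<le> 2*n-2" using ad unfolding adm_def by auto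
  show "invs (lift n g U) = invs (rst g (W_M n ` U))" unfolding le
    by (rule invs_union_up) (use ir is_gen_iff hl Uin n2 in \<open>force+\<close>)
  show "W_M n ` U \<subseteq> {1..n-1}" using M_up[of n] Uin n2 by auto
qed

lemma K3:
  assumes ig: "is_gen (n-1) g" and ad: "adm n g U" and ih: "is_gen (n-1) h" and adh: "adm n h U'"
  shows "gmult (lift n g U) (lift n h U') = Some c \<longleftrightarrow>
     U = U' \<and> (\<exists>k. gmult g h = Some k \<and> c = lift n k U)"
proof -
  define D where "D = W_M n ` U"
  define D' where "D' = W_M n ` U'"
  define g0 where "g0 = rst g D"
  define h0 where "h0 = rst h D'"
  note sg = lift_setup[OF ig ad, folded D_def, folded g0_def]
  note sh = lift_setup[OF ih adh, folded D'_def, folded h0_def]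
  have RL: "Range (lift n g U) = Range g0 \<union> U" unfolding sg(4) idg_def by auto
  have DL: "Domain (lift n h U') = Domain h0 \<union> U'" unfolding sh(4) idg_def by auto
  have rlow: "\<And>a. a \<in> Range g0 \<Longrightarrow> a \<le> n-1" using sg(6) by force
  have dlow: "\<And>a. a \<in> Domain h0 \<Longrightarrow> a \<le> n-1" using sh(6) by force
  have eqiff: "Range (lift n g U) = Domain (lift n h U') \<longleftrightarrow> Range g0 = Domain h0 \<and> U = U'"
  proof
    assume e: "Range (lift n g U) = Domain (lift n h U')"
    have "U = U'"
    proof -
      have "U = {a \<in> Range g0 \<union> U. n \<le> a}" using rlow sg(7) n2 by force
      also have "\<dots> = {a \<in> Domain h0 \<union> U'. n \<le> a}" using e RL DL by simp
      also have "\<dots> = U'" using dlow sh(7) n2 by force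
      finally show ?thesis .
    qed
    moreover have "Range g0 = Domain h0"
    proof -
      have "Range g0 = {a \<in> Range g0 \<union> U. a \<le> n-1}" using rlow sg(7) n2 by force
      also have "\<dots> = {a \<in> Domain h0 \<union> U'. a \<le> n-1}" using e RL DL by simp
      also have "\<dots> = Domain h0" using dlow sh(7) n2 by force
      finally show ?thesis .
    qed
    ultimately show "Range g0 = Domain h0 \<and> U = U'" by simp
  qed (use RL DL in simp)
  show ?thesis
  proof (cases "U = U'")
    case False
    then show ?thesis using eqiff unfolding gmult_def by auto
  next
    case True
    then have DD: "D' = D" unfolding D_def D'_def by simp
    have gE: "g = g0 \<union> idg D" using sg(1) .
    have hE: "h = h0 \<union> idg D" using sh(1) DD by simp
    have rgd1: "Range g = Range g0 \<union> D" using arg_cong[OF gE, of Range] by (simp add: RD_idg)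
    have rgd2: "Domain h = Domain h0 \<union> D" using arg_cong[OF hE, of Domain] RD_idg(2)[of h0 D] by (rule trans)
    note rgd = rgd1 rgd2
    have cond1: "Range g = Domain h \<longleftrightarrow> Range g0 = Domain h0"
      unfolding rgd by (rule un_cancel) (use sg(3) sh(2) DD in simp_all)
    show ?thesis
    proof (cases "Range g0 = Domain h0")
      case False
      then show ?thesis using eqiff cond1 unfolding gmult_def by auto
    next
      case rr: True
      have ig0: "is_gen (n-1) g0" and ih0: "is_gen (n-1) h0" using sg(5) sh(5) .
      have bg0: "bijr g0" "upw g0" and bh0: "bijr h0" "upw h0" using ig0 ih0 is_gen_iff by auto
      have fg0: "finite g0" "finite h0" using ig0 ih0 is_gen_finite by auto
      have comp1: "lift n g U O lift n h U' = g0 O h0 \<union> idg U"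
        unfolding sg(4) sh(4) unfolding True[symmetric]
      proof (rule comp_idg)
        show "Range g0 \<inter> U = {}" using rlow sg(7) n2 by force
        show "Domain h0 \<inter> U = {}" using dlow sg(7) n2 by force
      qed
      have comp2: "g O h = g0 O h0 \<union> idg D"
        unfolding gE hE by (rule comp_idg) (use sg(3) sh(2) DD in simp_all)
      have ig0h0: "is_gen (n-1) (g0 O h0)" using comp_gen[OF ig0 ih0 rr] .
      have lowgh: "\<And>a b. (a,b)\<in>g0 O h0 \<Longrightarrow> 1 \<le> a \<and> a \<le> b \<and> b \<le> n-1"
        using ig0h0 unfolding is_gen_def by auto
      have n1: "ninv (lift n g U) = ninv g0" unfolding ninv_def sg(8) ..
      have n2': "ninv (lift n h U') = ninv h0" unfolding ninv_def sh(8) ..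
      have n3: "ninv (g0 O h0 \<union> idg U) = ninv (g0 O h0)" unfolding ninv_def
        by (rule arg_cong[where f=card], rule invs_union_up)
           (use ig0h0 is_gen_iff lowgh sg(7) n2 in \<open>force+\<close>)
      have dgh: "Domain (g0 O h0) = Domain g0" using rr by blast
      have lk: "lift n (g0 O h0 \<union> idg D) U = g0 O h0 \<union> idg U"
        unfolding lift_def D_def[symmetric] rst_def using dgh sg(2) unfolding idg_def by blast
      have nc: "ninv g + ninv h = ninv (g O h) \<longleftrightarrow> ninv g0 + ninv h0 = ninv (g0 O h0)"
        unfolding comp2 gE hE
        by (rule ninv_comp_union[OF fg0 bg0(1) bh0(1) bg0(2) bh0(2) rr])
           (use sg(2) sg(3) sh(3) DD in blast)
      have L: "gmult (lift n g U) (lift n h U') =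
          (if ninv g0 + ninv h0 = ninv (g0 O h0) then Some (g0 O h0 \<union> idg U) else None)"
        unfolding gmult_def comp1 n1 n2' n3 using eqiff rr True by simp
      have nc': "ninv g + ninv h = ninv (g0 O h0 \<union> idg D) \<longleftrightarrow> ninv g0 + ninv h0 = ninv (g0 O h0)"
        using nc comp2 by simp
      have R: "gmult g h =
          (if ninv g0 + ninv h0 = ninv (g0 O h0) then Some (g0 O h0 \<union> idg D) else None)"
        unfolding gmult_def comp2 using cond1 rr nc' by simp
      show ?thesis using L R True lk by auto
    qed
  qed
qed

lemma K4:
  assumes ig: "is_gen (n-1) g" and ad: "adm n g U"
  shows "((p,q) \<in> invs (lift n g U) \<and> c = swap_strands (lift n g U) p q \<and> ninv c + 1 = ninv (lift n g U))
    \<longleftrightarrow> ((p,q) \<in> invs g \<and> fst p \<notin> W_M n ` U \<and> fst q \<notin> W_M n ` U \<and>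
         c = lift n (swap_strands g p q) U \<and> ninv (swap_strands g p q) + 1 = ninv g)"
proof -
  define D where "D = W_M n ` U"
  define g0 where "g0 = rst g D"
  note sg = lift_setup[OF ig ad, folded D_def, folded g0_def]
  have ii: "(p,q) \<in> invs g0 \<longleftrightarrow> (p,q) \<in> invs g \<and> fst p \<notin> D \<and> fst q \<notin> D"
    unfolding g0_def invs_def rst_def by auto
  show ?thesis
  proof (cases "(p,q) \<in> invs g0")
    case False
    then show ?thesis unfolding sg(8) D_def[symmetric] using ii by blast
  next
    case True
    have ig0: "is_gen (n-1) g0" using sg(5) .
    have bg0: "bijr g0" "upw g0" using ig0 is_gen_iff by auto
    have fg0: "finite g0" using ig0 is_gen_finite by auto
    have pq: "p \<in> g0" "q \<in> g0" using True unfolding invs_def by auto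
    have pqU: "p \<notin> idg U" "q \<notin> idg U" using pq sg(6) sg(7) n2 unfolding idg_def by force+
    have pqD: "p \<notin> idg D" "q \<notin> idg D" using pq sg(2) unfolding idg_def by force+
    have isw: "is_gen (n-1) (swap_strands g0 p q)" by (rule swap_gen[OF ig0 True])
    note sd = swap_dom[OF True]
    have s1: "swap_strands (lift n g U) p q = swap_strands g0 p q \<union> idg U"
      unfolding sg(4) swap_strands_def using pqU by blast
    have s2: "swap_strands g p q = swap_strands g0 p q \<union> idg D"
      using sg(1) pqD unfolding swap_strands_def by blast
    have lk: "lift n (swap_strands g0 p q \<union> idg D) U = swap_strands g0 p q \<union> idg U"
      unfolding lift_def D_def[symmetric] rst_def using sd(1) sg(2) unfolding idg_def by blast
    have lowsw: "\<And>a b. (a,b)\<in>swap_strands g0 p q \<Longrightarrow> 1 \<le> a \<and> a \<le> b \<and> b \<le> n-1"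
      using isw unfolding is_gen_def by auto
    have n1: "ninv (swap_strands g0 p q \<union> idg U) = ninv (swap_strands g0 p q)" unfolding ninv_def
    proof (rule arg_cong[where f=card], rule invs_union_up)
      show "upw (swap_strands g0 p q)" using isw is_gen_iff by blast
      fix a b u assume "(a,b)\<in>swap_strands g0 p q" "u \<in> U"
      then show "b < u" using lowsw[of a b] sg(7)[of u] n2 by auto
    qed
    have n2': "ninv (swap_strands g0 p q \<union> idg D) = ninv (swap_strands g0 p q) + cr (swap_strands g0 p q) D"
    proof (rule invs_union_id)
      show "finite (swap_strands g0 p q)" using isw is_gen_finite by blast
      show "upw (swap_strands g0 p q)" using isw is_gen_iff by blast
      show "D \<inter> (Domain (swap_strands g0 p q) \<union> Range (swap_strands g0 p q)) = {}"
        using sd sg(2) sg(3) by blast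
    qed
    have n3: "ninv g = ninv g0 + cr g0 D"
    proof -
      have "ninv (g0 \<union> idg D) = ninv g0 + cr g0 D"
        by (rule invs_union_id[OF fg0 bg0(2)]) (use sg(2) sg(3) in blast)
      then show ?thesis using sg(1) by simp
    qed
    have n4: "cr (swap_strands g0 p q) D = cr g0 D"
      by (rule swap_cr[OF fg0 bg0 True]) (use True ii in simp)
    have n5: "ninv (lift n g U) = ninv g0" unfolding ninv_def sg(8) ..
    show ?thesis unfolding s1 s2 lk n1 n2' n3 n4 n5 sg(8) D_def[symmetric] using True ii n1 by auto
  qed
qed

end


lemma gmult_SomeD: "gmult x y = Some c \<Longrightarrow> c = x O y \<and> Range x = Domain y \<and> ninv x + ninv y = ninv (x O y)"
  unfolding gmult_def by (auto split: if_splits)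

lemma Lf_add: "Lf n (eadd a b) = eadd (Lf n a) (Lf n b)"
  unfolding Lf_def eadd_def by auto

lemma adm_comp:
  assumes "adm n g U" "adm n h U" shows "adm n (g O h) U"
  using assms unfolding adm_def by blast

lemma adm_of_comp:
  assumes ug: "upw g" and uh: "upw h" and a: "adm n (g O h) U"
  shows "adm n g U" "adm n h U"
proof -
  { fix u assume "u \<in> U"
    then have "(W_M n u, W_M n u) \<in> g O h" using a unfolding adm_def by auto
    then obtain q where q: "(W_M n u, q) \<in> g" "(q, W_M n u) \<in> h" by blast
    have "q = W_M n u" using upwD[OF ug q(1)] upwD[OF uh q(2)] by simp
    then have "(W_M n u, W_M n u) \<in> g" "(W_M n u, W_M n u) \<in> h" using q by auto }
  then show "adm n g U" "adm n h U" using a unfolding adm_def by auto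
qed

lemma adm_swap:
  assumes a: "adm n g U" and pq: "(p,q) \<in> invs g" and np: "fst p \<notin> W_M n ` U" and nq: "fst q \<notin> W_M n ` U"
  shows "adm n (swap_strands g p q) U"
  using a np nq unfolding adm_def swap_strands_def by force

lemma adm_unswap:
  assumes ig: "is_gen m g" and pq: "(p,q) \<in> invs g" and a: "adm n (swap_strands g p q) V"
  shows "adm n g V" "fst p \<notin> W_M n ` V" "fst q \<notin> W_M n ` V"
proof -
  have bg: "bijr g" "upw g" using ig is_gen_iff by auto
  note sf = swap_facts[OF bg pq]
  have isw: "is_gen m (swap_strands g p q)" by (rule swap_gen[OF ig pq])
  then have bs: "bijr (swap_strands g p q)" using is_gen_iff by auto
  have inS: "(fst p, snd q) \<in> swap_strands g p q" "(fst q, snd p) \<in> swap_strands g p q"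
    unfolding sf(1) by auto
  { fix v assume v: "v \<in> V"
    let ?d = "W_M n v"
    have dd: "(?d,?d) \<in> swap_strands g p q" using a v unfolding adm_def by auto
    have "(?d,?d) \<noteq> (fst p, snd q)" "(?d,?d) \<noteq> (fst q, snd p)" using sf by auto
    then have "(?d,?d) \<in> g" using dd unfolding sf(1) by auto
    moreover have "fst p \<noteq> ?d"
    proof
      assume e: "fst p = ?d"
      have "snd q = ?d" using bijrD1[OF bs inS(1)] dd e by simp
      then show False using sf e by simp
    qed
    moreover have "fst q \<noteq> ?d"
    proof
      assume e: "fst q = ?d"
      have "snd p = ?d" using bijrD1[OF bs inS(2)] dd e by simp
      then show False using sf e by simp
    qed
    ultimately have "(?d,?d) \<in> g" "fst p \<noteq> ?d" "fst q \<noteq> ?d" by auto }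
  then show "adm n g V" "fst p \<notin> W_M n ` V" "fst q \<notin> W_M n ` V"
    using a unfolding adm_def by auto
qed

context
  fixes n :: nat assumes n2: "2 \<le> n"
begin

lemma gmult_W:
  assumes wx: "Wg n x" and wy: "Wg n y" and gm: "gmult x y = Some c"
  shows "Wg n c" "gmult (pj n x) (pj n y) = Some (pj n c)" "x = lift n (pj n x) (upp n c)"
    "y = lift n (pj n y) (upp n c)"
proof -
  note k1x = K1[OF n2 wx] and k1y = K1[OF n2 wy]
  have "gmult (lift n (pj n x) (upp n x)) (lift n (pj n y) (upp n y)) = Some c"
    using gm by (simp only: k1x(3)[symmetric] k1y(3)[symmetric])
  then have "upp n x = upp n y \<and> (\<exists>k. gmult (pj n x) (pj n y) = Some k \<and> c = lift n k (upp n x))"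
    by (rule iffD1[OF K3[OF n2 k1x(1) k1x(2) k1y(1) k1y(2)]])
  then obtain k where U: "upp n x = upp n y" and k: "gmult (pj n x) (pj n y) = Some k"
    and ck: "c = lift n k (upp n x)" by blast
  have kk: "k = pj n x O pj n y" "Range (pj n x) = Domain (pj n y)" using gmult_SomeD[OF k] by auto
  have ik: "is_gen (n-1) k" using comp_gen[OF k1x(1) k1y(1) kk(2)] kk(1) by simp
  have ak: "adm n k (upp n x)" using adm_comp[OF k1x(2)] k1y(2) U kk(1) by simp
  note k2 = K2[OF n2 ik ak]
  show "Wg n c" using k2(1) ck by simp
  show "gmult (pj n x) (pj n y) = Some (pj n c)" using k k2(2) ck by simp
  have uc: "upp n c = upp n x" using ck k2(3) by simp
  show "x = lift n (pj n x) (upp n c)" unfolding uc by (rule k1x(3))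
  show "y = lift n (pj n y) (upp n c)" unfolding uc U by (rule k1y(3))
qed

lemma Lf_mult:
  assumes Ga: "\<forall>g\<in>a. is_gen (n-1) g" and Gb: "\<forall>g\<in>b. is_gen (n-1) g"
  shows "emult (Lf n a) (Lf n b) = Lf n (emult a b)"
proof (rule set_eqI)
  fix c
  define PW where "PW = {(x,y). x \<in> Lf n a \<and> y \<in> Lf n b \<and> gmult x y = Some c}"
  have lhs: "c \<in> emult (Lf n a) (Lf n b) \<longleftrightarrow> odd (card PW)" unfolding emult_def PW_def by simp
  show "c \<in> emult (Lf n a) (Lf n b) \<longleftrightarrow> c \<in> Lf n (emult a b)"
  proof (cases "Wg n c")
    case False
    have "PW = {}"
    proof (rule ccontr)
      assume "PW \<noteq> {}"
      then obtain x y where "x \<in> Lf n a" "y \<in> Lf n b" "gmult x y = Some c" unfolding PW_def by auto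
      then have "Wg n c" using gmult_W(1) unfolding Lf_def by auto
      then show False using False by simp
    qed
    then show ?thesis using lhs False unfolding Lf_def by simp
  next
    case True
    define V where "V = upp n c"
    define ga where "ga = pj n c"
    note k1c = K1[OF n2 True, folded V_def ga_def]
    define PA where "PA = {(g,h). g \<in> a \<and> h \<in> b \<and> gmult g h = Some ga}"
    define F where "F = (\<lambda>(g,h). (lift n g V, lift n h V))"
    have admPA: "\<And>g h. (g,h) \<in> PA \<Longrightarrow> adm n g V \<and> adm n h V \<and> is_gen (n-1) g \<and> is_gen (n-1) h"
    proof -
      fix g h assume gh: "(g,h) \<in> PA"
      then have ig: "is_gen (n-1) g" and ih: "is_gen (n-1) h" using Ga Gb unfolding PA_def by auto
      have gg: "ga = g O h" using gh gmult_SomeD unfolding PA_def by auto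
      have "upw g" "upw h" using ig ih is_gen_iff by auto
      then have "adm n g V" "adm n h V" using adm_of_comp[of g h n V] k1c(2) gg by auto
      then show "adm n g V \<and> adm n h V \<and> is_gen (n-1) g \<and> is_gen (n-1) h" using ig ih by simp
    qed
    have img: "PW = F ` PA"
    proof
      show "PW \<subseteq> F ` PA"
      proof
        fix z assume "z \<in> PW"
        then obtain x y where z: "z = (x,y)" "x \<in> Lf n a" "y \<in> Lf n b" "gmult x y = Some c"
          unfolding PW_def by auto
        have wx: "Wg n x" "pj n x \<in> a" and wy: "Wg n y" "pj n y \<in> b" using z unfolding Lf_def by auto
        note gw = gmult_W[OF wx(1) wy(1) z(4), folded V_def ga_def]
        have "(pj n x, pj n y) \<in> PA" unfolding PA_def using wx wy gw(2) by auto
        moreover have "z = F (pj n x, pj n y)" unfolding F_def using z(1) gw(3) gw(4) by simp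
        ultimately show "z \<in> F ` PA" by blast
      qed
      show "F ` PA \<subseteq> PW"
      proof
        fix z assume "z \<in> F ` PA"
        then obtain g h where gh: "z = F (g,h)" "g \<in> a" "h \<in> b" "gmult g h = Some ga"
          unfolding PA_def by auto
        have ig: "is_gen (n-1) g" and ih: "is_gen (n-1) h" using gh Ga Gb by auto
        have gg: "ga = g O h" using gmult_SomeD[OF gh(4)] by simp
        have ag: "adm n g V" "adm n h V"
          using adm_of_comp[of g h n V] ig ih is_gen_iff k1c(2) gg by auto
        note k2g = K2[OF n2 ig ag(1)] and k2h = K2[OF n2 ih ag(2)]
        have "gmult (lift n g V) (lift n h V) = Some c"
          by (rule iffD2[OF K3[OF n2 ig ag(1) ih ag(2)]]) (use gh(4) k1c(3) in blast)
        then show "z \<in> PW" unfolding PW_def Lf_def using gh k2g k2h by (simp add: F_def)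
      qed
    qed
    have inj: "inj_on F PA"
    proof (rule inj_onI)
      fix z w assume z: "z \<in> PA" and w: "w \<in> PA" and e: "F z = F w"
      obtain g h where zz: "z = (g,h)" by (cases z)
      obtain g' h' where ww: "w = (g',h')" by (cases w)
      have a1: "adm n g V \<and> adm n h V \<and> is_gen (n-1) g \<and> is_gen (n-1) h" using z zz admPA by simp
      have a2: "adm n g' V \<and> adm n h' V \<and> is_gen (n-1) g' \<and> is_gen (n-1) h'" using w ww admPA by simp
      have "lift n g V = lift n g' V" "lift n h V = lift n h' V" using e zz ww unfolding F_def by auto
      then have "pj n (lift n g V) = pj n (lift n g' V)" "pj n (lift n h V) = pj n (lift n h' V)" by simp_all
      then show "z = w" using zz ww K2(2)[OF n2] a1 a2 by simp
    qed
    have "card PW = card PA" using img card_image[OF inj] by simp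
    moreover have "c \<in> Lf n (emult a b) \<longleftrightarrow> odd (card PA)"
      unfolding Lf_def emult_def PA_def ga_def using True by simp
    ultimately show ?thesis using lhs by simp
  qed
qed

end


context
  fixes n :: nat assumes n2: "2 \<le> n"
begin

lemma Lf_diff:
  assumes GX: "\<forall>g\<in>X. is_gen (n-1) g"
  shows "ediff (Lf n X) = Lf n (ediff X)"
proof (rule set_eqI)
  fix c
  define PW where "PW = {(x,p,q). x \<in> Lf n X \<and> (p,q) \<in> invs x \<and> c = swap_strands x p q \<and> ninv c + 1 = ninv x}"
  have lhs: "c \<in> ediff (Lf n X) \<longleftrightarrow> odd (card PW)" unfolding ediff_def PW_def by simp
  have fromW: "Wg n c \<and> pj n c = swap_strands (pj n x) p q \<and> upp n c = upp n x \<and>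
      (pj n x, p, q) \<in> {(g,p,q). (p,q) \<in> invs g \<and> pj n c = swap_strands g p q \<and> ninv (pj n c) + 1 = ninv g}"
    if xP: "(x,p,q) \<in> PW" for x p q
  proof -
    have wx: "Wg n x" and xX: "pj n x \<in> X" and r: "(p,q) \<in> invs x" "c = swap_strands x p q" "ninv c + 1 = ninv x"
      using xP unfolding PW_def Lf_def by auto
    note k1 = K1[OF n2 wx]
    have "(p,q) \<in> invs (lift n (pj n x) (upp n x)) \<and> c = swap_strands (lift n (pj n x) (upp n x)) p q
       \<and> ninv c + 1 = ninv (lift n (pj n x) (upp n x))"
      using r by (simp only: k1(3)[symmetric])
    then have k4: "(p,q) \<in> invs (pj n x) \<and> fst p \<notin> W_M n ` upp n x \<and> fst q \<notin> W_M n ` upp n x \<and>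
         c = lift n (swap_strands (pj n x) p q) (upp n x) \<and> ninv (swap_strands (pj n x) p q) + 1 = ninv (pj n x)"
      by (rule iffD1[OF K4[OF n2 k1(1) k1(2)]])
    have isw: "is_gen (n-1) (swap_strands (pj n x) p q)" using swap_gen[OF k1(1)] k4 by blast
    have asw: "adm n (swap_strands (pj n x) p q) (upp n x)" using adm_swap[OF k1(2)] k4 by blast
    note k2 = K2[OF n2 isw asw]
    show ?thesis using k2 k4 by simp
  qed
  show "c \<in> ediff (Lf n X) \<longleftrightarrow> c \<in> Lf n (ediff X)"
  proof (cases "Wg n c")
    case False
    have "PW = {}"
    proof (rule ccontr)
      assume "PW \<noteq> {}"
      then obtain x p q where "(x,p,q) \<in> PW" by auto
      then show False using fromW False by blast
    qed
    then show ?thesis using lhs False unfolding Lf_def by simp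
  next
    case True
    define V where "V = upp n c"
    define ga where "ga = pj n c"
    note k1c = K1[OF n2 True, folded V_def ga_def]
    define PA where "PA = {(g,p,q). g \<in> X \<and> (p,q) \<in> invs g \<and> ga = swap_strands g p q \<and> ninv ga + 1 = ninv g}"
    define F where "F = (\<lambda>(g::gen,pq::(nat\<times>nat)\<times>(nat\<times>nat)). (lift n g V, pq))"
    have admPA: "adm n g V \<and> fst p \<notin> W_M n ` V \<and> fst q \<notin> W_M n ` V \<and> is_gen (n-1) g"
      if gP: "(g,p,q) \<in> PA" for g p q
    proof -
      have ig: "is_gen (n-1) g" and pq: "(p,q) \<in> invs g" and e: "ga = swap_strands g p q"
        using gP GX unfolding PA_def by auto
      have "adm n (swap_strands g p q) V" using k1c(2) e by simp
      then show ?thesis using adm_unswap[OF ig pq] ig by blast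
    qed
    have img: "PW = F ` PA"
    proof
      show "PW \<subseteq> F ` PA"
      proof
        fix z assume zP: "z \<in> PW"
        then obtain x p q where z: "z = (x,p,q)" unfolding PW_def by auto
        have xP: "(x,p,q) \<in> PW" using zP z by simp
        have xX: "pj n x \<in> X" and wx: "Wg n x" using xP unfolding PW_def Lf_def by auto
        note fw = fromW[OF xP]
        have "(pj n x, p, q) \<in> PA" unfolding PA_def ga_def using fw xX by auto
        moreover have xe: "lift n (pj n x) V = x" unfolding V_def using fw K1(3)[OF n2 wx] by simp
        moreover have "F (pj n x, p, q) = z" unfolding F_def z using xe by simp
        ultimately show "z \<in> F ` PA" by (metis image_eqI)
      qed
      show "F ` PA \<subseteq> PW"
      proof
        fix z assume "z \<in> F ` PA"
        then obtain g p q where gP: "(g,p,q) \<in> PA" and z: "z = (lift n g V, p, q)" unfolding F_def by auto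
        note ap = admPA[OF gP]
        have r: "g \<in> X" "(p,q) \<in> invs g" "ga = swap_strands g p q" "ninv ga + 1 = ninv g"
          using gP unfolding PA_def by auto
        have "(p,q) \<in> invs (lift n g V) \<and> c = swap_strands (lift n g V) p q \<and> ninv c + 1 = ninv (lift n g V)"
          by (rule iffD2[OF K4[OF n2 _ _]]) (use ap r k1c(3) in auto)
        moreover have "lift n g V \<in> Lf n X" unfolding Lf_def using K2[OF n2, of g V] ap r by simp
        ultimately show "z \<in> PW" unfolding PW_def z by auto
      qed
    qed
    have inj: "inj_on F PA"
    proof (rule inj_onI)
      fix z w assume z: "z \<in> PA" and w: "w \<in> PA" and e: "F z = F w"
      obtain g p q where zz: "z = (g,p,q)" by (cases z) auto
      obtain g' p' q' where ww: "w = (g',p',q')" by (cases w) auto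
      have a1: "adm n g V" "is_gen (n-1) g" using admPA z zz by auto
      have a2: "adm n g' V" "is_gen (n-1) g'" using admPA w ww by auto
      have "lift n g V = lift n g' V" "p = p'" "q = q'" using e zz ww unfolding F_def by auto
      moreover have "pj n (lift n g V) = g" "pj n (lift n g' V) = g'"
        using K2(2)[OF n2] a1 a2 by auto
      ultimately show "z = w" using zz ww by metis
    qed
    have "card PW = card PA" using img card_image[OF inj] by simp
    moreover have "c \<in> Lf n (ediff X) \<longleftrightarrow> odd (card PA)"
      unfolding Lf_def ediff_def PA_def ga_def using True by simp
    ultimately show ?thesis using lhs by simp
  qed
qed

end


lemma card_dom_range:
  assumes "finite g" "bijr g" shows "card (Domain g) = card g" "card (Range g) = card g"
proof -
  have "inj_on fst g" using assms(2) unfolding inj_on_def bijr_def by fastforce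
  moreover have "Domain g = fst ` g" by force
  ultimately show "card (Domain g) = card g" by (simp add: card_image)
  have "inj_on snd g" using assms(2) unfolding inj_on_def bijr_def by fastforce
  moreover have "Range g = snd ` g" by force
  ultimately show "card (Range g) = card g" by (simp add: card_image)
qed

lemma idg_Dom: "Domain (idg A) = A" "Range (idg A) = A" unfolding idg_def by auto

lemma idg_inj: "idg A = idg B \<Longrightarrow> A = B"
  by (metis idg_Dom(1))

lemma invs_idg: "invs (idg S) = {}" unfolding invs_def idg_def by auto

lemma gmult_idg_left: "gmult (idg S) y = Some c \<longleftrightarrow> S = Domain y \<and> c = y"
proof -
  have "S = Domain y \<Longrightarrow> idg S O y = y" unfolding idg_def by auto
  then show ?thesis unfolding gmult_def ninv_def invs_idg idg_Dom by auto
qed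

lemma gmult_idg_right: "gmult y (idg S) = Some c \<longleftrightarrow> S = Range y \<and> c = y"
proof -
  have "S = Range y \<Longrightarrow> y O idg S = y" unfolding idg_def by auto
  then show ?thesis unfolding gmult_def ninv_def invs_idg idg_Dom by auto
qed

lemma emult_idg_left:
  assumes E: "\<And>e. e \<in> E \<Longrightarrow> \<exists>S. e = idg S"
  shows "emult E X = {y\<in>X. idg (Domain y) \<in> E}"
proof (rule set_eqI)
  fix c
  have "{(e,y). e \<in> E \<and> y \<in> X \<and> gmult e y = Some c} =
        (if idg (Domain c) \<in> E \<and> c \<in> X then {(idg (Domain c), c)} else {})"
  proof -
    have A: "\<And>e y. e \<in> E \<Longrightarrow> gmult e y = Some c \<Longrightarrow> e = idg (Domain c) \<and> y = c"
    proof -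
      fix e y assume "e \<in> E" "gmult e y = Some c"
      then obtain S where "e = idg S" using E by blast
      then show "e = idg (Domain c) \<and> y = c" using gmult_idg_left \<open>gmult e y = Some c\<close> by auto
    qed
    have B: "gmult (idg (Domain c)) c = Some c" using gmult_idg_left by simp
    show ?thesis
    proof (cases "idg (Domain c) \<in> E \<and> c \<in> X")
      case True then show ?thesis using A B by auto
    next
      case False then show ?thesis using A by auto
    qed
  qed
  then show "c \<in> emult E X \<longleftrightarrow> c \<in> {y\<in>X. idg (Domain y) \<in> E}" unfolding emult_def by auto
qed

lemma emult_idg_right:
  assumes E: "\<And>e. e \<in> E \<Longrightarrow> \<exists>S. e = idg S"
  shows "emult X E = {y\<in>X. idg (Range y) \<in> E}"
proof (rule set_eqI)
  fix c
  have "{(y,e). y \<in> X \<and> e \<in> E \<and> gmult y e = Some c} =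
        (if idg (Range c) \<in> E \<and> c \<in> X then {(c, idg (Range c))} else {})"
  proof -
    have A: "\<And>e y. e \<in> E \<Longrightarrow> gmult y e = Some c \<Longrightarrow> e = idg (Range c) \<and> y = c"
    proof -
      fix e y assume "e \<in> E" "gmult y e = Some c"
      then obtain S where "e = idg S" using E by blast
      then show "e = idg (Range c) \<and> y = c" using gmult_idg_right \<open>gmult y e = Some c\<close> by auto
    qed
    have B: "gmult c (idg (Range c)) = Some c" using gmult_idg_right by simp
    show ?thesis
    proof (cases "idg (Range c) \<in> E \<and> c \<in> X")
      case True then show ?thesis using A B by auto
    next
      case False then show ?thesis using A by auto
    qed
  qed
  then show "c \<in> emult X E \<longleftrightarrow> c \<in> {y\<in>X. idg (Range y) \<in> E}" unfolding emult_def by auto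
qed

lemma finite_gens: "finite {g. is_gen m g}"
proof -
  have "{g. is_gen m g} \<subseteq> Pow ({1..m}\<times>{1..m})" unfolding is_gen_def by auto
  then show ?thesis using finite_subset by blast
qed

lemma SA_add: "a \<in> strands_alg m k \<Longrightarrow> b \<in> strands_alg m k \<Longrightarrow> eadd a b \<in> strands_alg m k"
  unfolding strands_alg_def eadd_def by auto

lemma SA_mult:
  assumes "a \<in> strands_alg m k" "b \<in> strands_alg m k" shows "emult a b \<in> strands_alg m k"
proof -
  have "\<forall>c\<in>emult a b. is_gen m c \<and> card c = k"
  proof
    fix c assume "c \<in> emult a b"
    then have "odd (card {(x,y). x \<in> a \<and> y \<in> b \<and> gmult x y = Some c})" unfolding emult_def by simp
    then have "{(x,y). x \<in> a \<and> y \<in> b \<and> gmult x y = Some c} \<noteq> {}" by (metis card.empty even_zero)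
    then obtain x y where xy: "x \<in> a" "y \<in> b" "gmult x y = Some c" by blast
    have gx: "is_gen m x" "card x = k" and gy: "is_gen m y" using xy assms unfolding strands_alg_def by auto
    note gs = gmult_SomeD[OF xy(3)]
    have "is_gen m c" using comp_gen[OF gx(1) gy] gs by simp
    moreover have "card c = k"
      using comp_lemma(2)[of x y "{}"] gs gx gy is_gen_finite is_gen_iff by auto
    ultimately show "is_gen m c \<and> card c = k" by simp
  qed
  moreover have "finite (emult a b)" using calculation finite_gens[of m] finite_subset
    by (metis (no_types, lifting) mem_Collect_eq subsetI)
  ultimately show ?thesis unfolding strands_alg_def by simp
qed

lemma SA_diff:
  assumes "a \<in> strands_alg m k" shows "ediff a \<in> strands_alg m k"
proof -
  have "\<forall>c\<in>ediff a. is_gen m c \<and> card c = k"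
  proof
    fix c assume "c \<in> ediff a"
    then have "odd (card {(x,p,q). x \<in> a \<and> (p,q) \<in> invs x \<and> c = swap_strands x p q \<and> ninv c + 1 = ninv x})"
      unfolding ediff_def by simp
    then have "{(x,p,q). x \<in> a \<and> (p,q) \<in> invs x \<and> c = swap_strands x p q \<and> ninv c + 1 = ninv x} \<noteq> {}"
      by (metis card.empty even_zero)
    then obtain x p q where xy: "x \<in> a" "(p,q) \<in> invs x" "c = swap_strands x p q" by blast
    have gx: "is_gen m x" "card x = k" using xy assms unfolding strands_alg_def by auto
    have "is_gen m c" using swap_gen[OF gx(1) xy(2)] xy by simp
    moreover have "card c = k" using swap_card[OF _ _ _ xy(2)] gx is_gen_finite is_gen_iff xy by auto
    ultimately show "is_gen m c \<and> card c = k" by simp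
  qed
  moreover have "finite (ediff a)" using calculation finite_gens[of m] finite_subset
    by (metis (no_types, lifting) mem_Collect_eq subsetI)
  ultimately show ?thesis unfolding strands_alg_def by simp
qed

lemma Lf_empty: "Lf n {} = {}" unfolding Lf_def by simp

lemma Lf_insert: "g \<notin> Y \<Longrightarrow> Lf n (insert g Y) = eadd (Lf n {g}) (Lf n Y)"
  unfolding Lf_def eadd_def by auto

context
  fixes n :: nat assumes n2: "2 \<le> n"
begin

lemma gen_in_Lf: assumes "is_gen (n-1) g" shows "Wg n g" "pj n g = g"
proof -
  have a: "adm n g {}" unfolding adm_def by simp
  have l: "lift n g {} = g" unfolding lift_def rst_def idg_def by auto
  show "Wg n g" "pj n g = g" using K2[OF n2 assms a] l by auto
qed

lemma Lf_inj: "inj_on (Lf n) (strands_alg (n-1) k)"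
proof (rule inj_onI)
  fix Y Y' assume Y: "Y \<in> strands_alg (n-1) k" and Y': "Y' \<in> strands_alg (n-1) k" and e: "Lf n Y = Lf n Y'"
  have "\<And>g. g \<in> Y \<Longrightarrow> g \<in> Y'"
  proof -
    fix g assume "g \<in> Y"
    then have "is_gen (n-1) g" using Y unfolding strands_alg_def by auto
    note gi = gen_in_Lf[OF this]
    then have "g \<in> Lf n Y" using \<open>g \<in> Y\<close> unfolding Lf_def by auto
    then show "g \<in> Y'" using e gi unfolding Lf_def by auto
  qed
  moreover have "\<And>g. g \<in> Y' \<Longrightarrow> g \<in> Y"
  proof -
    fix g assume "g \<in> Y'"
    then have "is_gen (n-1) g" using Y' unfolding strands_alg_def by auto
    note gi = gen_in_Lf[OF this]
    then have "g \<in> Lf n Y'" using \<open>g \<in> Y'\<close> unfolding Lf_def by auto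
    then have "g \<in> Lf n Y" using e by simp
    then show "g \<in> Y" using gi unfolding Lf_def by auto
  qed
  ultimately show "Y = Y'" by blast
qed

lemma Domain_pj: "Domain (pj n x) = W_M n ` Domain x"
  unfolding pj_def by force

lemma M_range: "1 \<le> a \<Longrightarrow> a \<le> 2*n-2 \<Longrightarrow> 1 \<le> W_M n a \<and> W_M n a \<le> n-1"
  using M_up[of n a] M_low[of a n] n2 by (cases "a \<le> n-1") auto

end


definition aA :: "nat \<Rightarrow> nat \<Rightarrow> gen \<Rightarrow> elt" where
  "aA n k psi = {psi \<union> idg U | U. U \<subseteq> {1..n-1} \<and> U \<inter> (Domain psi \<union> Range psi) = {} \<and> card (Domain psi \<union> U) = k}"

lemma bijr_union_id:
  assumes b: "bijr psi" and d: "U \<inter> (Domain psi \<union> Range psi) = {}"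
  shows "bijr (psi \<union> idg U)"
proof -
  { fix a b c e assume ab: "(a,b) \<in> psi \<union> idg U" and ce: "(c,e) \<in> psi \<union> idg U"
    have "a = c \<longleftrightarrow> b = e"
    proof (cases "(a,b) \<in> psi")
      case True note t = this
      show ?thesis
      proof (cases "(c,e) \<in> psi")
        case True then show ?thesis using t b unfolding bijr_def by blast
      next
        case False then have "c = e" "c \<in> U" using ce unfolding idg_def by auto
        then show ?thesis using t d by blast
      qed
    next
      case False then have ab2: "a = b" "a \<in> U" using ab unfolding idg_def by auto
      show ?thesis
      proof (cases "(c,e) \<in> psi")
        case True then show ?thesis using ab2 d by blast
      next
        case False then have "c = e" using ce unfolding idg_def by auto
        then show ?thesis using ab2 by simp
      qed
    qed }
  then show ?thesis unfolding bijr_def by fast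
qed

lemma Dom_un_idg: "Domain (psi \<union> idg U) = Domain psi \<union> U" "Range (psi \<union> idg U) = Range psi \<union> U"
  unfolding idg_def by auto

context
  fixes n :: nat assumes n2: "2 \<le> n"
begin

lemma Wg_idg: assumes "S \<subseteq> {1..2*n-2}" "inj_on (W_M n) S" shows "Wg n (idg S)" "pj n (idg S) = idg (W_M n ` S)"
proof -
  have "is_gen (2*n-2) (idg S)" using assms(1) unfolding is_gen_def idg_def by auto
  then show "Wg n (idg S)" unfolding Wg_def ext_gen_def idg_Dom using assms(2) unfolding idg_def by auto
  show "pj n (idg S) = idg (W_M n ` S)" unfolding pj_def idg_def by force
qed

lemma Is_eq:
  shows "I_s (2*n-2) (W_M n) s = Lf n {idg s}"
proof
  show "I_s (2*n-2) (W_M n) s \<subseteq> Lf n {idg s}"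
  proof
    fix y assume "y \<in> I_s (2*n-2) (W_M n) s"
    then obtain S where y: "y = idg S" "S \<subseteq> {1..2*n-2}" "inj_on (W_M n) S" "W_M n ` S = s"
      unfolding I_s_def by auto
    show "y \<in> Lf n {idg s}" unfolding Lf_def using Wg_idg[OF y(2) y(3)] y by simp
  qed
  show "Lf n {idg s} \<subseteq> I_s (2*n-2) (W_M n) s"
  proof
    fix x assume "x \<in> Lf n {idg s}"
    then have w: "Wg n x" and p: "pj n x = idg s" unfolding Lf_def by auto
    have e: "ext_gen (2*n-2) (W_seg n) x" and iD: "inj_on (W_M n) (Domain x)" using w unfolding Wg_def by auto
    note es = ext_strand[OF n2 e]
    have hor: "\<And>a b. (a,b) \<in> x \<Longrightarrow> a = b"
    proof -
      fix a b assume ab: "(a,b) \<in> x"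
      have "(W_M n a, W_M n b) \<in> idg s" using p ab unfolding pj_def by force
      then have "W_M n a = W_M n b" unfolding idg_def by auto
      then show "a = b" using es(4)[OF ab] M_low by auto
    qed
    have xe: "x = idg (Domain x)" using hor unfolding idg_def by force
    have "Domain x \<subseteq> {1..2*n-2}" using es by force
    moreover have "W_M n ` Domain x = s" using p Domain_pj[OF n2, of x] idg_Dom(1)[of s] by simp
    ultimately show "x \<in> I_s (2*n-2) (W_M n) s" unfolding I_s_def using xe iD by blast
  qed
qed

lemma idgs_SA: assumes "s \<subseteq> {1..n-1}" "card s = k" shows "{idg s} \<in> strands_alg (n-1) k"
proof -
  have "is_gen (n-1) (idg s)" using assms unfolding is_gen_def idg_def by auto
  moreover have "card (idg s) = k"
  proof -
    have "idg s = (\<lambda>x. (x,x)) ` s" unfolding idg_def by auto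
    then show ?thesis using assms(2) card_image[of "\<lambda>x. (x,x)" s] by (simp add: inj_on_def)
  qed
  ultimately show ?thesis unfolding strands_alg_def by auto
qed

lemma It_mem: "e \<in> I_tot (2*n-2) (n-1) (W_M n) k \<longleftrightarrow>
    (\<exists>S. e = idg S \<and> S \<subseteq> {1..2*n-2} \<and> inj_on (W_M n) S \<and> card S = k)"
proof
  assume "e \<in> I_tot (2*n-2) (n-1) (W_M n) k"
  then obtain s S where h: "s \<subseteq> {1..n-1}" "card s = k" "e = idg S" "S \<subseteq> {1..2*n-2}" "inj_on (W_M n) S"
      "W_M n ` S = s" unfolding I_tot_def I_s_def by auto
  have "card S = k" using card_image[OF h(5)] h(2) h(6) by simp
  then show "\<exists>S. e = idg S \<and> S \<subseteq> {1..2*n-2} \<and> inj_on (W_M n) S \<and> card S = k"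
    using h by blast
next
  assume "\<exists>S. e = idg S \<and> S \<subseteq> {1..2*n-2} \<and> inj_on (W_M n) S \<and> card S = k"
  then obtain S where S: "e = idg S" "S \<subseteq> {1..2*n-2}" "inj_on (W_M n) S" "card S = k" by blast
  have "W_M n ` S \<subseteq> {1..n-1}" using S(2) M_range[OF n2] by force
  moreover have "card (W_M n ` S) = k" using S card_image[OF S(3)] by simp
  ultimately show "e \<in> I_tot (2*n-2) (n-1) (W_M n) k" unfolding I_tot_def I_s_def using S by blast
qed

lemma It_idg: "idg S \<in> I_tot (2*n-2) (n-1) (W_M n) k \<longleftrightarrow>
    S \<subseteq> {1..2*n-2} \<and> inj_on (W_M n) S \<and> card S = k"
  using It_mem idg_inj by metis

end


context
  fixes n :: nat assumes n2: "2 \<le> n"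
begin

lemma B2:
  assumes ep: "ext_gen (2*n-2) (W_seg n) psi" and st: "\<forall>(a,b)\<in>psi. a < b"
  shows "emult (emult (I_tot (2*n-2) (n-1) (W_M n) k) (a_elt (2*n-2) k psi)) (I_tot (2*n-2) (n-1) (W_M n) k)
          = Lf n (aA n k psi)" (is ?A)
    and "aA n k psi \<in> strands_alg (n-1) k" (is ?B)
proof -
  define It where "It = I_tot (2*n-2) (n-1) (W_M n) k"
  have isid: "\<And>e. e \<in> It \<Longrightarrow> \<exists>S. e = idg S" using It_mem[OF n2] unfolding It_def by blast
  have E1: "emult (emult It A) It = {y \<in> A. idg (Domain y) \<in> It \<and> idg (Range y) \<in> It}" for A
  proof -
    have "emult It A = {y\<in>A. idg (Domain y) \<in> It}" by (rule emult_idg_left[where E=It, OF isid])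
    moreover have "emult (emult It A) It = {y\<in>emult It A. idg (Range y) \<in> It}"
      by (rule emult_idg_right[where E=It, OF isid])
    ultimately show ?thesis by auto
  qed
  have igp: "is_gen (2*n-2) psi" using ep unfolding ext_gen_def by auto
  have bp: "bijr psi" "upw psi" using igp is_gen_iff by auto
  have pl: "\<And>a b. (a,b) \<in> psi \<Longrightarrow> 1 \<le> a \<and> a < b \<and> b \<le> n-1"
  proof -
    fix a b assume ab: "(a,b)\<in>psi"
    have "a < b" using st ab by auto
    then show "1 \<le> a \<and> a < b \<and> b \<le> n-1" using ext_strand[OF n2 ep ab] by auto
  qed
  have pjpsi: "(\<lambda>(a,b). (W_M n a, W_M n b)) ` psi = psi"
  proof -
    have "\<And>y. y\<in>psi \<Longrightarrow> (\<lambda>(a,b). (W_M n a, W_M n b)) y = y"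
    proof -
      fix y assume "y \<in> psi"
      then obtain a b where "y = (a,b)" "(a,b)\<in>psi" by (cases y) auto
      then show "(\<lambda>(a,b). (W_M n a, W_M n b)) y = y" using pl[of a b] M_low[of _ n] by simp
    qed
    then show ?thesis using image_cong[OF refl, of psi "\<lambda>(a,b). (W_M n a, W_M n b)" "\<lambda>y. y"] by simp
  qed
  have Mdom: "W_M n ` Domain psi = Domain psi"
  proof -
    have "\<And>a. a \<in> Domain psi \<Longrightarrow> W_M n a = a" using pl M_low by force
    then show ?thesis by (simp add: image_cong)
  qed
  show ?B
  proof -
    have "\<forall>y\<in>aA n k psi. is_gen (n-1) y \<and> card y = k"
    proof
      fix y assume "y \<in> aA n k psi"
      then obtain U where y: "y = psi \<union> idg U" "U \<subseteq> {1..n-1}" "U \<inter> (Domain psi \<union> Range psi) = {}"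
        "card (Domain psi \<union> U) = k" unfolding aA_def by auto
      have byy: "bijr y" using bijr_union_id[OF bp(1) y(3)] y(1) by simp
      have "is_gen (n-1) y"
      proof -
        have "y \<subseteq> {1..n-1}\<times>{1..n-1}" using y(1,2) pl unfolding idg_def by fastforce
        moreover have "upw y" using y(1) bp(2) unfolding upw_def idg_def by auto
        ultimately show ?thesis using byy is_gen_iff by blast
      qed
      moreover have "card y = k"
        using card_dom_range(1)[OF is_gen_finite[OF calculation] byy] y(1) y(4) Dom_un_idg by simp
      ultimately show "is_gen (n-1) y \<and> card y = k" by simp
    qed
    moreover have "finite (aA n k psi)"
      using calculation finite_gens[of "n-1"] finite_subset by (metis (no_types, lifting) mem_Collect_eq subsetI)
    ultimately show ?thesis unfolding strands_alg_def by simp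
  qed
  show ?A unfolding It_def[symmetric] E1
  proof
    show "{y \<in> a_elt (2*n-2) k psi. idg (Domain y) \<in> It \<and> idg (Range y) \<in> It} \<subseteq> Lf n (aA n k psi)"
    proof
      fix y assume "y \<in> {y \<in> a_elt (2*n-2) k psi. idg (Domain y) \<in> It \<and> idg (Range y) \<in> It}"
      then obtain U where y: "y = psi \<union> idg U" "U \<subseteq> {1..2*n-2}" "U \<inter> (Domain psi \<union> Range psi) = {}"
        "card (Domain psi \<union> U) = k" and iy: "idg (Domain y) \<in> It" "idg (Range y) \<in> It"
        unfolding a_elt_def by auto
      have iD: "inj_on (W_M n) (Domain y)" and iR: "inj_on (W_M n) (Range y)"
        using iy It_idg[OF n2] unfolding It_def by auto
      have byy: "bijr y" using bijr_union_id[OF bp(1) y(3)] y(1) by simp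
      have wy: "Wg n y"
      proof -
        have "y \<subseteq> {1..2*n-2}\<times>{1..2*n-2}" using y(1,2) pl n2 unfolding idg_def by fastforce
        moreover have "upw y" using y(1) bp(2) unfolding upw_def idg_def by auto
        ultimately have "is_gen (2*n-2) y" using byy is_gen_iff by blast
        moreover have "\<forall>(a,b)\<in>y. W_seg n a = W_seg n b"
          using y(1) ep unfolding ext_gen_def idg_def by auto
        ultimately show ?thesis unfolding Wg_def ext_gen_def using iD iR by blast
      qed
      have pjy: "pj n y = psi \<union> idg (W_M n ` U)"
        unfolding pj_def y(1) image_Un pjpsi unfolding idg_def by force
      have dy: "Domain y = Domain psi \<union> U" "Range y = Range psi \<union> U" using y(1) Dom_un_idg by auto
      have U1: "W_M n ` U \<subseteq> {1..n-1}" using y(2) M_range[OF n2] by force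
      have U2: "W_M n ` U \<inter> (Domain psi \<union> Range psi) = {}"
      proof -
        { fix u assume u: "u \<in> U" and m: "W_M n u \<in> Domain psi"
          have "W_M n (W_M n u) = W_M n u" using m pl M_low by force
          then have "W_M n u = u" using iD u m dy unfolding inj_on_def by blast
          then have False using u m y(3) by auto }
        moreover
        { fix u assume u: "u \<in> U" and m: "W_M n u \<in> Range psi"
          have "W_M n (W_M n u) = W_M n u" using m pl M_low by force
          then have "W_M n u = u" using iR u m dy unfolding inj_on_def by blast
          then have False using u m y(3) by auto }
        ultimately show ?thesis by blast
      qed
      have U3: "card (Domain psi \<union> W_M n ` U) = k"
      proof -
        have "W_M n ` (Domain psi \<union> U) = Domain psi \<union> W_M n ` U" using Mdom by auto
        then show ?thesis using card_image[OF iD] dy y(4) by simp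
      qed
      have "pj n y \<in> aA n k psi" unfolding aA_def pjy using U1 U2 U3 by blast
      then show "y \<in> Lf n (aA n k psi)" unfolding Lf_def using wy by simp
    qed
    show "Lf n (aA n k psi) \<subseteq> {y \<in> a_elt (2*n-2) k psi. idg (Domain y) \<in> It \<and> idg (Range y) \<in> It}"
    proof
      fix y assume "y \<in> Lf n (aA n k psi)"
      then have wy: "Wg n y" and "pj n y \<in> aA n k psi" unfolding Lf_def by auto
      then obtain U' where U': "pj n y = psi \<union> idg U'" "U' \<subseteq> {1..n-1}"
        "U' \<inter> (Domain psi \<union> Range psi) = {}" "card (Domain psi \<union> U') = k" unfolding aA_def by auto
      have e: "ext_gen (2*n-2) (W_seg n) y" and iD: "inj_on (W_M n) (Domain y)"
        and iR: "inj_on (W_M n) (Range y)" using wy unfolding Wg_def by auto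
      note es = ext_strand[OF n2 e]
      have igy: "is_gen (2*n-2) y" using e unfolding ext_gen_def by auto
      then have byy: "bijr y" and fy: "finite y" using is_gen_iff is_gen_finite by auto
      define U where "U = {a. (a,a) \<in> y}"
      have s1: "y \<subseteq> psi \<union> idg U"
      proof
        fix z assume "z \<in> y"
        then obtain a b where z: "z = (a,b)" "(a,b) \<in> y" by (cases z) auto
        show "z \<in> psi \<union> idg U"
        proof (cases "a = b")
          case True then show ?thesis using z unfolding U_def idg_def by auto
        next
          case False
          then have lo: "a \<le> n-1" "b \<le> n-1" using es(4)[OF z(2)] by auto
          have "(W_M n a, W_M n b) \<in> pj n y" using z unfolding pj_def by force
          then have "(a,b) \<in> psi \<union> idg U'" using lo M_low U'(1) by simp
          then show ?thesis using False z unfolding idg_def by auto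
        qed
      qed
      have s2: "psi \<subseteq> y"
      proof
        fix z assume "z \<in> psi"
        then obtain a b where z: "z = (a,b)" "(a,b) \<in> psi" by (cases z) auto
        then have "(a,b) \<in> pj n y" using U'(1) by simp
        then obtain a' b' where ab': "(a',b') \<in> y" "W_M n a' = a" "W_M n b' = b" unfolding pj_def by auto
        have "a' \<noteq> b'" using ab' pl[OF z(2)] by auto
        then have "a' \<le> n-1" "b' \<le> n-1" using es(4)[OF ab'(1)] by auto
        then have "a' = a" "b' = b" using ab' M_low by auto
        then show "z \<in> y" using z ab' by simp
      qed
      have s3: "idg U \<subseteq> y" unfolding U_def idg_def by auto
      have ye: "y = psi \<union> idg U" using s1 s2 s3 by blast
      have Usub: "U \<subseteq> {1..2*n-2}" unfolding U_def using es by fastforce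
      have Udis: "U \<inter> (Domain psi \<union> Range psi) = {}"
      proof -
        { fix u assume u: "u \<in> U" "u \<in> Domain psi"
          then obtain b where "(u,b) \<in> psi" by auto
          moreover have "(u,u) \<in> y" using u unfolding U_def by auto
          ultimately have "b = u" using bijrD1[OF byy] s2 by blast
          then have False using \<open>(u,b) \<in> psi\<close> pl by force }
        moreover
        { fix u assume u: "u \<in> U" "u \<in> Range psi"
          then obtain a where "(a,u) \<in> psi" by auto
          moreover have "(u,u) \<in> y" using u unfolding U_def by auto
          ultimately have "a = u" using bijrD2[OF byy] s2 by blast
          then have False using \<open>(a,u) \<in> psi\<close> pl by force }
        ultimately show ?thesis by blast
      qed
      have dy: "Domain y = Domain psi \<union> U" using ye Dom_un_idg by auto
      have cD: "card (Domain y) = k"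
      proof -
        have "card (Domain y) = card (W_M n ` Domain y)" using card_image[OF iD] by simp
        also have "\<dots> = card (Domain (pj n y))" using Domain_pj[OF n2] by simp
        also have "\<dots> = k" using U'(1) U'(4) Dom_un_idg by simp
        finally show ?thesis .
      qed
      have cR: "card (Range y) = k" using card_dom_range[OF fy byy] cD by simp
      have DR: "Domain y \<subseteq> {1..2*n-2}" "Range y \<subseteq> {1..2*n-2}" using igy unfolding is_gen_def by auto
      have "y \<in> a_elt (2*n-2) k psi" unfolding a_elt_def using ye Usub Udis dy cD by auto
      moreover have "idg (Domain y) \<in> It" "idg (Range y) \<in> It"
        unfolding It_def using It_idg[OF n2] iD iR cD cR DR by auto
      ultimately show "y \<in> {y \<in> a_elt (2*n-2) k psi. idg (Domain y) \<in> It \<and> idg (Range y) \<in> It}" by simp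
    qed
  qed
qed

end


context
  fixes n :: nat assumes n2: "2 \<le> n"
begin

abbreviation "AA k \<equiv> arc_alg (2*n-2) (n-1) (W_seg n) (W_M n) k"

lemma SA_gens: "Y \<in> strands_alg (n-1) k \<Longrightarrow> \<forall>g\<in>Y. is_gen (n-1) g"
  unfolding strands_alg_def by auto

lemma B3:
  assumes ig: "is_gen (n-1) g" and cg: "card g = k"
  shows "Lf n {g} \<in> AA k"
proof -
  define psi where "psi = {(a,b)\<in>g. a < b}"
  define F where "F = {a. (a,a) \<in> g}"
  have bg: "bijr g" "upw g" and sg: "g \<subseteq> {1..n-1}\<times>{1..n-1}" using ig is_gen_iff by auto
  have fg: "finite g" using ig is_gen_finite by auto
  have ge: "g = psi \<union> idg F"
    unfolding psi_def F_def idg_def using upwD[OF bg(2)] by (auto simp: le_less)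
  have psig: "psi \<subseteq> g" unfolding psi_def by auto
  have ep: "ext_gen (2*n-2) (W_seg n) psi"
  proof -
    have "is_gen (n-1) psi" using is_gen_subset[OF ig psig] .
    then have "is_gen (2*n-2) psi" unfolding is_gen_def using n2 by fastforce
    moreover have "\<forall>(a,b)\<in>psi. W_seg n a = W_seg n b" using psig sg unfolding W_seg_def by fastforce
    ultimately show ?thesis unfolding ext_gen_def by simp
  qed
  have st: "\<forall>(a,b)\<in>psi. a < b" unfolding psi_def by auto
  have Fsub: "F \<subseteq> {1..n-1}" unfolding F_def using sg by auto
  have Fdis: "F \<inter> (Domain psi \<union> Range psi) = {}"
  proof -
    { fix f assume f: "f \<in> F" "f \<in> Domain psi"
      then obtain b where b: "(f,b) \<in> psi" by auto
      have "(f,f) \<in> g" using f unfolding F_def by auto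
      then have "b = f" using bijrD1[OF bg(1)] b psig by blast
      then have False using b unfolding psi_def by auto }
    moreover
    { fix f assume f: "f \<in> F" "f \<in> Range psi"
      then obtain a where a: "(a,f) \<in> psi" by auto
      have "(f,f) \<in> g" using f unfolding F_def by auto
      then have "a = f" using bijrD2[OF bg(1)] a psig by blast
      then have False using a unfolding psi_def by auto }
    ultimately show ?thesis by blast
  qed
  have dg: "Domain g = Domain psi \<union> F" using ge Dom_un_idg by metis
  have cdg: "card (Domain g) = k" using card_dom_range(1)[OF fg bg(1)] cg by simp
  have gA: "g \<in> aA n k psi" unfolding aA_def using ge Fsub Fdis dg cdg by auto
  have em: "emult {idg (Domain g)} (aA n k psi) = {g}"
  proof -
    have "emult {idg (Domain g)} (aA n k psi) = {y \<in> aA n k psi. idg (Domain y) \<in> {idg (Domain g)}}"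
      by (rule emult_idg_left) auto
    also have "\<dots> = {g}"
    proof
      show "{g} \<subseteq> {y \<in> aA n k psi. idg (Domain y) \<in> {idg (Domain g)}}" using gA by simp
      show "{y \<in> aA n k psi. idg (Domain y) \<in> {idg (Domain g)}} \<subseteq> {g}"
      proof
        fix y assume "y \<in> {y \<in> aA n k psi. idg (Domain y) \<in> {idg (Domain g)}}"
        then obtain U where y: "y = psi \<union> idg U" "U \<inter> (Domain psi \<union> Range psi) = {}"
          and d: "idg (Domain y) = idg (Domain g)" unfolding aA_def by auto
        have "Domain y = Domain g" using idg_inj[OF d] .
        then have "Domain psi \<union> U = Domain psi \<union> F" using y(1) dg Dom_un_idg by metis
        then have "U = F" using y(2) Fdis by blast
        then show "y \<in> {g}" using y(1) ge by simp
      qed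
    qed
    finally show ?thesis .
  qed
  have ds: "Domain g \<subseteq> {1..n-1}" using sg by auto
  have gens1: "\<forall>e\<in>{idg (Domain g)}. is_gen (n-1) e" using SA_gens idgs_SA[OF n2 ds cdg] by blast
  have gens2: "\<forall>e\<in>aA n k psi. is_gen (n-1) e" using SA_gens B2(2)[OF n2 ep st] by blast
  have "Lf n {g} = emult (Lf n {idg (Domain g)}) (Lf n (aA n k psi))"
    using Lf_mult[OF n2 gens1 gens2] em by simp
  also have "\<dots> = emult (I_s (2*n-2) (W_M n) (Domain g))
      (emult (emult (I_tot (2*n-2) (n-1) (W_M n) k) (a_elt (2*n-2) k psi)) (I_tot (2*n-2) (n-1) (W_M n) k))"
    using Is_eq[OF n2] B2(1)[OF n2 ep st] by simp
  also have "\<dots> \<in> AA k" unfolding arc_alg_def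
  proof (rule gen_subalg.mult; rule gen_subalg.base)
    show "I_s (2*n-2) (W_M n) (Domain g) \<in> {I_s (2*n-2) (W_M n) s |s. s \<subseteq> {1..n-1} \<and> card s = k} \<union>
      {emult (emult (I_tot (2*n-2) (n-1) (W_M n) k) (a_elt (2*n-2) k psi)) (I_tot (2*n-2) (n-1) (W_M n) k) |psi.
        ext_gen (2*n-2) (W_seg n) psi \<and> (\<forall>(a, b)\<in>psi. a < b)}" using ds cdg by blast
    show "emult (emult (I_tot (2*n-2) (n-1) (W_M n) k) (a_elt (2*n-2) k psi)) (I_tot (2*n-2) (n-1) (W_M n) k)
      \<in> {I_s (2*n-2) (W_M n) s |s. s \<subseteq> {1..n-1} \<and> card s = k} \<union>
      {emult (emult (I_tot (2*n-2) (n-1) (W_M n) k) (a_elt (2*n-2) k psi)) (I_tot (2*n-2) (n-1) (W_M n) k) |psi.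
        ext_gen (2*n-2) (W_seg n) psi \<and> (\<forall>(a, b)\<in>psi. a < b)}" using ep st by blast
  qed
  finally show ?thesis .
qed

lemma arc_eq: "AA k = Lf n ` strands_alg (n-1) k"
proof
  show "AA k \<subseteq> Lf n ` strands_alg (n-1) k"
  proof
    fix x assume "x \<in> AA k"
    then show "x \<in> Lf n ` strands_alg (n-1) k" unfolding arc_alg_def
    proof (induction rule: gen_subalg.induct)
      case (base x)
      then show ?case
      proof
        assume "x \<in> {I_s (2*n-2) (W_M n) s |s. s \<subseteq> {1..n-1} \<and> card s = k}"
        then obtain s where s: "x = I_s (2*n-2) (W_M n) s" "s \<subseteq> {1..n-1}" "card s = k" by blast
        then show ?case using Is_eq[OF n2] idgs_SA[OF n2 s(2) s(3)] by blast
      next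
        assume "x \<in> {emult (emult (I_tot (2*n-2) (n-1) (W_M n) k) (a_elt (2*n-2) k psi)) (I_tot (2*n-2) (n-1) (W_M n) k) |psi.
          ext_gen (2*n-2) (W_seg n) psi \<and> (\<forall>(a, b)\<in>psi. a < b)}"
        then obtain psi where p: "x = emult (emult (I_tot (2*n-2) (n-1) (W_M n) k) (a_elt (2*n-2) k psi)) (I_tot (2*n-2) (n-1) (W_M n) k)"
          "ext_gen (2*n-2) (W_seg n) psi" "\<forall>(a, b)\<in>psi. a < b" by blast
        then show ?case using B2[OF n2 p(2) p(3)] by blast
      qed
    next
      case zero
      have "{} \<in> strands_alg (n-1) k" unfolding strands_alg_def by simp
      then show ?case using Lf_empty by blast
    next
      case (add x y)
      then obtain a b where ab: "x = Lf n a" "y = Lf n b" "a \<in> strands_alg (n-1) k" "b \<in> strands_alg (n-1) k" by blast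
      then show ?case using Lf_add SA_add by blast
    next
      case (mult x y)
      then obtain a b where ab: "x = Lf n a" "y = Lf n b" "a \<in> strands_alg (n-1) k" "b \<in> strands_alg (n-1) k" by blast
      have "emult x y = Lf n (emult a b)" using Lf_mult[OF n2 SA_gens[OF ab(3)] SA_gens[OF ab(4)]] ab by simp
      then show ?case using SA_mult[OF ab(3) ab(4)] by blast
    qed
  qed
  show "Lf n ` strands_alg (n-1) k \<subseteq> AA k"
  proof
    fix x assume "x \<in> Lf n ` strands_alg (n-1) k"
    then obtain Y where Y: "x = Lf n Y" "Y \<in> strands_alg (n-1) k" by blast
    have fY: "finite Y" and gY: "\<forall>g\<in>Y. is_gen (n-1) g \<and> card g = k" using Y(2) unfolding strands_alg_def by auto
    have "Lf n Y \<in> AA k" using fY gY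
    proof (induction Y rule: finite_induct)
      case empty
      show ?case unfolding Lf_empty arc_alg_def by (rule gen_subalg.zero)
    next
      case (insert g F)
      have "Lf n {g} \<in> AA k" using B3 insert.prems by simp
      moreover have "Lf n F \<in> AA k" using insert.IH insert.prems by simp
      ultimately show ?case unfolding Lf_insert[OF insert.hyps(2)] arc_alg_def by (rule gen_subalg.add)
    qed
    then show "x \<in> AA k" using Y by simp
  qed
qed

end

theorem mainTheorem3:
  fixes n k :: nat
  assumes "2 \<le> n" and "k \<le> n - 1"
  shows "dga_iso (arc_alg (2 * n - 2) (n - 1) (W_seg n) (W_M n) k) (strands_alg (n - 1) k)"
proof -
  have n2: "2 \<le> n" by fact
  define SA where "SA = strands_alg (n - 1) k"
  define f where "f = inv_into SA (Lf n)"
  have A: "arc_alg (2 * n - 2) (n - 1) (W_seg n) (W_M n) k = Lf n ` SA" unfolding SA_def by (rule arc_eq[OF n2])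
  have inj: "inj_on (Lf n) SA" unfolding SA_def by (rule Lf_inj[OF n2])
  have bij: "bij_betw f (Lf n ` SA) SA" unfolding f_def
    by (rule bij_betw_inv_into[OF inj_on_imp_bij_betw[OF inj]])
  have ff: "\<And>a. a \<in> SA \<Longrightarrow> f (Lf n a) = a" unfolding f_def using inv_into_f_f[OF inj] by blast
  have hom: "\<forall>x\<in>Lf n ` SA. \<forall>y\<in>Lf n ` SA. f (eadd x y) = eadd (f x) (f y) \<and> f (emult x y) = emult (f x) (f y)"
  proof (intro ballI)
    fix x y assume "x \<in> Lf n ` SA" "y \<in> Lf n ` SA"
    then obtain a b where ab: "x = Lf n a" "y = Lf n b" "a \<in> SA" "b \<in> SA" by blast
    have "eadd x y = Lf n (eadd a b)" using ab Lf_add by simp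
    moreover have "emult x y = Lf n (emult a b)"
      using ab Lf_mult[OF n2 SA_gens[OF n2] SA_gens[OF n2]] unfolding SA_def by simp
    moreover have "eadd a b \<in> SA" "emult a b \<in> SA" using ab SA_add SA_mult unfolding SA_def by auto
    ultimately show "f (eadd x y) = eadd (f x) (f y) \<and> f (emult x y) = emult (f x) (f y)"
      using ff ab by simp
  qed
  have dif: "\<forall>x\<in>Lf n ` SA. f (ediff x) = ediff (f x)"
  proof
    fix x assume "x \<in> Lf n ` SA"
    then obtain a where a: "x = Lf n a" "a \<in> SA" by blast
    have "ediff x = Lf n (ediff a)" using a Lf_diff[OF n2 SA_gens[OF n2]] unfolding SA_def by simp
    moreover have "ediff a \<in> SA" using a SA_diff unfolding SA_def by auto
    ultimately show "f (ediff x) = ediff (f x)" using ff a by simp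
  qed
  show ?thesis unfolding dga_iso_def A SA_def[symmetric] using bij hom dif by blast
qed


end
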